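(* Let $\mathcal{C}$ be the complete computational structure of a linear system $G$ with generalized state-space realization $\dot{x}=Ax+\hat{A}w+Bu$, $w=\bar{A}x+\tilde{A}w+\bar{B}u$, $y=Cx+\bar{C}w+Du$ ($I-\tilde{A}$ invertible), and suppose its minimal intricacy realization $(A_o,B_o,C_o,D_o)$ has $C_o=\begin{bmatrix}C_{11}&C_{12}\\C_{21}&C_{22}\end{bmatrix}$ with $C_{11}$ invertible. Then $\mathcal{C}$ specifies a unique subsystem structure, a unique signal structure, and a unique sparsity structure.
   Context: Inputs $u\in\mathbb{R}^m$, states $x\in\mathbb{R}^n$, auxiliary variables $w\in\mathbb{R}^l$, outputs $y\in\mathbb{R}^p$. Complete computational structure $\mathcal{C}$: directed graph with one vertex per input, state, auxiliary variable and output; an edge from vertex $a$ to vertex $b$ (labelled by the variable produced at $a$) whenever the equation defining the variable at $b$ depends on the variable at $a$ (nonzero coefficient). Inputs and outputs are manifest; states are hidden; auxiliary variables are hidden unless passed directly out as outputs. A partition of $V(\mathcal{C})$ is admissible if every edge between distinct components represents a manifest variable. The subsystem structure is the condensation graph of $\mathcal{C}$ with respect to an admissible partition of maximal cardinality (vertices = components, labelled by their transfer functions; edge $(S_i,S_j)$ if some edge of $\mathcal{C}$ goes from $S_i$ to $S_j$). Minimal intricacy realization: $A_o=A+\hat{A}(I-\tilde{A})^{-1}\bar{A}$, $B_o=B+\hat{A}(I-\tilde{A})^{-1}\bar{B}$, $C_o=C+\bar{C}(I-\tilde{A})^{-1}\bar{A}$, $D_o=D+\bar{C}(I-\tilde{A})^{-1}\bar{B}$.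 Signal structure: let $p_1=\operatorname{rank}C_o$, with outputs/states ordered so that $C_{11}\in\mathbb{R}^{p_1\times p_1}$ is invertible. Let $\begin{bmatrix}N_1\\N_2\end{bmatrix}$ ($N_2\in\mathbb{R}^{(n-p_1)\times(n-p_1)}$) have columns forming a basis of $\ker C_o$ (then $N_2$ is invertible), and $T=\begin{bmatrix}C_{11}&C_{12}\\0&N_2^{-1}\end{bmatrix}$. In coordinates $z=Tx$ the system reads $\dot{z}_1=A_{11}z_1+A_{12}z_2+B_1u$, $\dot{z}_2=A_{21}z_1+A_{22}z_2+B_2u$, $y_1=z_1+D_1u$, $y_2=C_2z_1+D_2u$, with $C_2=C_{21}C_{11}^{-1}$. Put $W(s)=A_{11}+A_{12}(sI-A_{22})^{-1}A_{21}$, $V(s)=B_1+A_{12}(sI-A_{22})^{-1}B_2$, $\hat{D}(s)$ the diagonal part of $W(s)$, $Q(s)=(sI-\hat{D})^{-1}(W-\hat{D})$, $P(s)=(sI-\hat{D})^{-1}V$; $(Q,P)$ is the dynamical structure function and $Y_1=QY_1+(P+(I-Q)D_1)U$, $Y_2=C_2Y_1+D_2U$. The signal structure is the directed graph with vertices $u_1,\dots,u_m,y_{11},\dots,y_{1p_1},y_{21},\dots,y_{2(p-p_1)}$ and an edge $u_i\to y_{1j}$, $u_i\to y_{2j}$, $y_{1i}\to y_{1j}$, $y_{1i}\to y_{2j}$ whenever the corresponding entry of $P+(I-Q)D_1$, $D_2$, $Q$, $C_2$ respectively is nonzero, labelled by that entry. Sparsity structure: bipartite directed graph with vertices $u_1,\dots,u_m,y_1,\dots,y_p$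 and an edge $u_i\to y_j$ (labelled $G_{ji}$) whenever the $(j,i)$ entry of the transfer function $G(s)=C_o(sI-A_o)^{-1}B_o+D_o$ is nonzero. *)

theory Defs
  imports "Jordan_Normal_Form.DL_Rank" "Jordan_Normal_Form.Gauss_Jordan_Elimination" "Jordan_Normal_Form.Matrix_Kernel"
begin

text \<open>xdot = A x + Ah w + B u,  w = Ab x + At w + Bb u,  y = C x + Cb w + D u,
  with n states, m inputs, l auxiliary variables, p outputs.\<close>

record gss =
  gA  :: "real mat"
  gAh :: "real mat"
  gB  :: "real mat"
  gAb :: "real mat"
  gAt :: "real mat"
  gBb :: "real mat"
  gC  :: "real mat"
  gCb :: "real mat"
  gD  :: "real mat"

definition gss_wf :: "gss \<Rightarrow> nat \<Rightarrow> nat \<Rightarrow> nat \<Rightarrow> nat \<Rightarrow> bool" where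
  "gss_wf S n m l p \<longleftrightarrow>
     gA S \<in> carrier_mat n n \<and> gAh S \<in> carrier_mat n l \<and> gB S \<in> carrier_mat n m \<and>
     gAb S \<in> carrier_mat l n \<and> gAt S \<in> carrier_mat l l \<and> gBb S \<in> carrier_mat l m \<and>
     gC S \<in> carrier_mat p n \<and> gCb S \<in> carrier_mat p l \<and> gD S \<in> carrier_mat p m"

text \<open>Matrix inverse (meaningful for invertible square matrices).\<close>
definition minv :: "'a::field mat \<Rightarrow> 'a mat" where
  "minv M = the (mat_inverse M)"

definition sub_mat :: "'a mat \<Rightarrow> nat \<Rightarrow> nat \<Rightarrow> nat \<Rightarrow> nat \<Rightarrow> 'a mat" where
  "sub_mat M r0 c0 r c = mat r c (\<lambda>(i,j). M $$ (i + r0, j + c0))"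

definition cmat :: "real mat \<Rightarrow> complex mat" where
  "cmat M = map_mat complex_of_real M"

definition gss_Ao :: "gss \<Rightarrow> real mat" where
  "gss_Ao S = gA S + gAh S * minv (1\<^sub>m (dim_row (gAt S)) - gAt S) * gAb S"
definition gss_Bo :: "gss \<Rightarrow> real mat" where
  "gss_Bo S = gB S + gAh S * minv (1\<^sub>m (dim_row (gAt S)) - gAt S) * gBb S"
definition gss_Co :: "gss \<Rightarrow> real mat" where
  "gss_Co S = gC S + gCb S * minv (1\<^sub>m (dim_row (gAt S)) - gAt S) * gAb S"
definition gss_Do :: "gss \<Rightarrow> real mat" where
  "gss_Do S = gD S + gCb S * minv (1\<^sub>m (dim_row (gAt S)) - gAt S) * gBb S"

text \<open>Entries of transfer matrices are rational functions in s; we represent them by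
  their values at complex s. A rational function is nonzero iff it is nonzero at
  infinitely many points, and two are equal iff they agree outside a finite set.\<close>
definition tf_nonzero :: "(complex \<Rightarrow> complex) \<Rightarrow> bool" where
  "tf_nonzero f \<longleftrightarrow> infinite {s. f s \<noteq> 0}"
definition tf_eq :: "(complex \<Rightarrow> complex) \<Rightarrow> (complex \<Rightarrow> complex) \<Rightarrow> bool" where
  "tf_eq f g \<longleftrightarrow> finite {s. f s \<noteq> g s}"

datatype cvertex = VU nat | VX nat | VW nat | VY nat

definition cs_vertices :: "nat \<Rightarrow> nat \<Rightarrow> nat \<Rightarrow> nat \<Rightarrow> cvertex set" where
  "cs_vertices n m l p = VU ` {..<m} \<union> VX ` {..<n} \<union> VW ` {..<l} \<union> VY ` {..<p}"

text \<open>Edge a -> b iff the equation defining the variable at b depends on the variable at a.\<close>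
fun cs_edge :: "gss \<Rightarrow> nat \<Rightarrow> nat \<Rightarrow> nat \<Rightarrow> nat \<Rightarrow> cvertex \<Rightarrow> cvertex \<Rightarrow> bool" where
  "cs_edge S n m l p (VU i) (VX j) = (i < m \<and> j < n \<and> gB S $$ (j,i) \<noteq> 0)"
| "cs_edge S n m l p (VU i) (VW j) = (i < m \<and> j < l \<and> gBb S $$ (j,i) \<noteq> 0)"
| "cs_edge S n m l p (VU i) (VY j) = (i < m \<and> j < p \<and> gD S $$ (j,i) \<noteq> 0)"
| "cs_edge S n m l p (VX i) (VX j) = (i < n \<and> j < n \<and> gA S $$ (j,i) \<noteq> 0)"
| "cs_edge S n m l p (VX i) (VW j) = (i < n \<and> j < l \<and> gAb S $$ (j,i) \<noteq> 0)"
| "cs_edge S n m l p (VX i) (VY j) = (i < n \<and> j < p \<and> gC S $$ (j,i) \<noteq> 0)"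
| "cs_edge S n m l p (VW i) (VX j) = (i < l \<and> j < n \<and> gAh S $$ (j,i) \<noteq> 0)"
| "cs_edge S n m l p (VW i) (VW j) = (i < l \<and> j < l \<and> gAt S $$ (j,i) \<noteq> 0)"
| "cs_edge S n m l p (VW i) (VY j) = (i < l \<and> j < p \<and> gCb S $$ (j,i) \<noteq> 0)"
| "cs_edge S n m l p _ _ = False"

definition aux_output :: "gss \<Rightarrow> nat \<Rightarrow> nat \<Rightarrow> nat \<Rightarrow> nat \<Rightarrow> nat \<Rightarrow> bool" where
  "aux_output S n m l p k \<longleftrightarrow> (\<exists>j<p. (\<forall>i<n. gC S $$ (j,i) = 0) \<and> (\<forall>i<m. gD S $$ (j,i) = 0)
       \<and> (\<forall>i<l. gCb S $$ (j,i) = (if i = k then 1 else 0)))"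

fun manifest :: "gss \<Rightarrow> nat \<Rightarrow> nat \<Rightarrow> nat \<Rightarrow> nat \<Rightarrow> cvertex \<Rightarrow> bool" where
  "manifest S n m l p (VU i) = True"
| "manifest S n m l p (VY i) = True"
| "manifest S n m l p (VX i) = False"
| "manifest S n m l p (VW k) = aux_output S n m l p k"

definition is_partition :: "'a set \<Rightarrow> 'a set set \<Rightarrow> bool" where
  "is_partition V P \<longleftrightarrow> (\<forall>B\<in>P. B \<noteq> {} \<and> B \<subseteq> V) \<and> \<Union>P = V \<and>
     (\<forall>B1\<in>P. \<forall>B2\<in>P. B1 \<noteq> B2 \<longrightarrow> B1 \<inter> B2 = {})"

definition admissible_partition :: "gss \<Rightarrow> nat \<Rightarrow> nat \<Rightarrow> nat \<Rightarrow> nat \<Rightarrow> cvertex set set \<Rightarrow> bool" where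
  "admissible_partition S n m l p P \<longleftrightarrow> is_partition (cs_vertices n m l p) P \<and>
     (\<forall>a b. cs_edge S n m l p a b \<longrightarrow> \<not> (\<exists>B\<in>P. a \<in> B \<and> b \<in> B) \<longrightarrow> manifest S n m l p a)"

definition max_admissible_partition :: "gss \<Rightarrow> nat \<Rightarrow> nat \<Rightarrow> nat \<Rightarrow> nat \<Rightarrow> cvertex set set \<Rightarrow> bool" where
  "max_admissible_partition S n m l p P \<longleftrightarrow> admissible_partition S n m l p P \<and>
     (\<forall>P'. admissible_partition S n m l p P' \<longrightarrow> card P' \<le> card P)"

definition is_subsystem_structure ::
  "gss \<Rightarrow> nat \<Rightarrow> nat \<Rightarrow> nat \<Rightarrow> nat \<Rightarrow> cvertex set set \<times> (cvertex set \<times> cvertex set) set \<Rightarrow> bool" where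
  "is_subsystem_structure S n m l p G \<longleftrightarrow> (\<exists>P. max_admissible_partition S n m l p P \<and>
     G = (P, {(B1, B2). B1 \<in> P \<and> B2 \<in> P \<and> (\<exists>a\<in>B1. \<exists>b\<in>B2. cs_edge S n m l p a b)}))"

definition gss_p1 :: "gss \<Rightarrow> nat" where
  "gss_p1 S = vec_space.rank (dim_row (gss_Co S)) (gss_Co S)"

definition gss_C11 :: "gss \<Rightarrow> real mat" where
  "gss_C11 S = sub_mat (gss_Co S) 0 0 (gss_p1 S) (gss_p1 S)"

definition kernel_basis :: "gss \<Rightarrow> nat \<Rightarrow> real mat \<Rightarrow> bool" where
  "kernel_basis S n N \<longleftrightarrow> N \<in> carrier_mat n (n - gss_p1 S) \<and>
     mat_kernel (gss_Co S) = {N *\<^sub>v c | c. c \<in> carrier_vec (n - gss_p1 S)} \<and>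
     (\<forall>c \<in> carrier_vec (n - gss_p1 S). N *\<^sub>v c = 0\<^sub>v n \<longrightarrow> c = 0\<^sub>v (n - gss_p1 S))"

datatype svertex = SU nat | SY1 nat | SY2 nat

definition dsf_data :: "gss \<Rightarrow> nat \<Rightarrow> nat \<Rightarrow> nat \<Rightarrow> real mat \<Rightarrow>
    (complex \<Rightarrow> complex mat) \<times> (complex \<Rightarrow> complex mat) \<times> real mat \<times> real mat" where
  "dsf_data S n m p N = (let
     p1 = gss_p1 S; k = n - p1;
     Co = gss_Co S; Ao = gss_Ao S; Bo = gss_Bo S; Do = gss_Do S;
     C11 = sub_mat Co 0 0 p1 p1; C12 = sub_mat Co 0 p1 p1 k; C21 = sub_mat Co p1 0 (p - p1) p1;
     N2 = sub_mat N p1 0 k k;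
     T = four_block_mat C11 C12 (0\<^sub>m k p1) (minv N2);
     Az = T * Ao * minv T; Bz = T * Bo;
     A11 = sub_mat Az 0 0 p1 p1; A12 = sub_mat Az 0 p1 p1 k;
     A21 = sub_mat Az p1 0 k p1; A22 = sub_mat Az p1 p1 k k;
     B1 = sub_mat Bz 0 0 p1 m; B2 = sub_mat Bz p1 0 k m;
     D1 = sub_mat Do 0 0 p1 m; D2 = sub_mat Do p1 0 (p - p1) m;
     C2 = C21 * minv C11;
     W = (\<lambda>s. cmat A11 + cmat A12 * minv (s \<cdot>\<^sub>m 1\<^sub>m k - cmat A22) * cmat A21);
     V = (\<lambda>s. cmat B1 + cmat A12 * minv (s \<cdot>\<^sub>m 1\<^sub>m k - cmat A22) * cmat B2);
     Dh = (\<lambda>s. mat p1 p1 (\<lambda>(i,j). if i = j then W s $$ (i,j) else 0));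
     Q = (\<lambda>s. minv (s \<cdot>\<^sub>m 1\<^sub>m p1 - Dh s) * (W s - Dh s));
     P = (\<lambda>s. minv (s \<cdot>\<^sub>m 1\<^sub>m p1 - Dh s) * V s);
     PD = (\<lambda>s. P s + (1\<^sub>m p1 - Q s) * cmat D1)
   in (Q, PD, C2, D2))"

fun sig_label :: "gss \<Rightarrow> nat \<Rightarrow> nat \<Rightarrow> nat \<Rightarrow> real mat \<Rightarrow> svertex \<Rightarrow> svertex \<Rightarrow> complex \<Rightarrow> complex" where
  "sig_label S n m p N (SU i) (SY1 j) = (\<lambda>s. if i < m \<and> j < gss_p1 S
        then (fst (snd (dsf_data S n m p N))) s $$ (j,i) else 0)"
| "sig_label S n m p N (SU i) (SY2 j) = (\<lambda>s. if i < m \<and> j < p - gss_p1 S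
        then complex_of_real (snd (snd (snd (dsf_data S n m p N))) $$ (j,i)) else 0)"
| "sig_label S n m p N (SY1 i) (SY1 j) = (\<lambda>s. if i < gss_p1 S \<and> j < gss_p1 S
        then (fst (dsf_data S n m p N)) s $$ (j,i) else 0)"
| "sig_label S n m p N (SY1 i) (SY2 j) = (\<lambda>s. if i < gss_p1 S \<and> j < p - gss_p1 S
        then complex_of_real (fst (snd (snd (dsf_data S n m p N))) $$ (j,i)) else 0)"
| "sig_label S n m p N _ _ = (\<lambda>s. 0)"

type_synonym 'v lgraph = "('v \<times> 'v) set \<times> ('v \<Rightarrow> 'v \<Rightarrow> complex \<Rightarrow> complex)"

definition labelled_graph :: "('v \<Rightarrow> 'v \<Rightarrow> complex \<Rightarrow> complex) \<Rightarrow> 'v lgraph" where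
  "labelled_graph L = ({(a, b). tf_nonzero (L a b)}, L)"

definition is_signal_structure :: "gss \<Rightarrow> nat \<Rightarrow> nat \<Rightarrow> nat \<Rightarrow> svertex lgraph \<Rightarrow> bool" where
  "is_signal_structure S n m p G \<longleftrightarrow>
     (\<exists>N. kernel_basis S n N \<and> G = labelled_graph (sig_label S n m p N))"

definition lgraph_eq :: "'v lgraph \<Rightarrow> 'v lgraph \<Rightarrow> bool" where
  "lgraph_eq G1 G2 \<longleftrightarrow> fst G1 = fst G2 \<and> (\<forall>a b. tf_eq (snd G1 a b) (snd G2 a b))"

datatype pvertex = PU nat | PY nat

definition transfer_fn :: "gss \<Rightarrow> nat \<Rightarrow> complex \<Rightarrow> complex mat" where
  "transfer_fn S n s = cmat (gss_Co S) * minv (s \<cdot>\<^sub>m 1\<^sub>m n - cmat (gss_Ao S)) * cmat (gss_Bo S)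
      + cmat (gss_Do S)"

fun sparse_label :: "gss \<Rightarrow> nat \<Rightarrow> nat \<Rightarrow> nat \<Rightarrow> pvertex \<Rightarrow> pvertex \<Rightarrow> complex \<Rightarrow> complex" where
  "sparse_label S n m p (PU i) (PY j) = (\<lambda>s. if i < m \<and> j < p then transfer_fn S n s $$ (j,i) else 0)"
| "sparse_label S n m p _ _ = (\<lambda>s. 0)"

definition is_sparsity_structure :: "gss \<Rightarrow> nat \<Rightarrow> nat \<Rightarrow> nat \<Rightarrow> pvertex lgraph \<Rightarrow> bool" where
  "is_sparsity_structure S n m p G \<longleftrightarrow> G = labelled_graph (sparse_label S n m p)"

end

theory Submission
  imports Defs "Jordan_Normal_Form.Char_Poly" "Jordan_Normal_Form.DL_Rank_Submatrix"
begin


definition hrel :: "gss \<Rightarrow> nat \<Rightarrow> nat \<Rightarrow> nat \<Rightarrow> nat \<Rightarrow> (cvertex \<times> cvertex) set" where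
  "hrel S n m l p = {(a,b). cs_edge S n m l p a b \<and> \<not> manifest S n m l p a}"

definition eqr :: "gss \<Rightarrow> nat \<Rightarrow> nat \<Rightarrow> nat \<Rightarrow> nat \<Rightarrow> (cvertex \<times> cvertex) set" where
  "eqr S n m l p = (hrel S n m l p \<union> (hrel S n m l p)\<inverse>)\<^sup>*"

definition cls where "cls S n m l p x = eqr S n m l p `` {x}"

definition finp where "finp S n m l p = cls S n m l p ` cs_vertices n m l p"

lemma cs_edge_V: "cs_edge S n m l p a b \<Longrightarrow> a \<in> cs_vertices n m l p \<and> b \<in> cs_vertices n m l p"
  by (cases a; cases b) (auto simp: cs_vertices_def)

lemma finite_V: "finite (cs_vertices n m l p)"
  by (simp add: cs_vertices_def)

lemma eqr_sym: "(x,y) \<in> eqr S n m l p \<Longrightarrow> (y,x) \<in> eqr S n m l p"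
  unfolding eqr_def by (metis converse_Un converse_converse rtrancl_converseI sup_commute)

lemma eqr_trans: "(x,y) \<in> eqr S n m l p \<Longrightarrow> (y,z) \<in> eqr S n m l p \<Longrightarrow> (x,z) \<in> eqr S n m l p"
  unfolding eqr_def by (meson rtrancl_trans)

lemma cls_self: "x \<in> cls S n m l p x" unfolding cls_def eqr_def by auto

lemma cls_eq: "y \<in> cls S n m l p x \<Longrightarrow> cls S n m l p y = cls S n m l p x"
  unfolding cls_def using eqr_sym eqr_trans by blast

lemma eqr_V: "(x,y) \<in> eqr S n m l p \<Longrightarrow> x \<in> cs_vertices n m l p \<Longrightarrow> y \<in> cs_vertices n m l p"
  unfolding eqr_def
proof (induction rule: rtrancl_induct)
  case base then show ?case by simp
next
  case (step y z) then show ?case using cs_edge_V unfolding hrel_def by auto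
qed

lemma cls_V: "x \<in> cs_vertices n m l p \<Longrightarrow> cls S n m l p x \<subseteq> cs_vertices n m l p"
  unfolding cls_def using eqr_V by blast

lemma adm_disj: assumes "admissible_partition S n m l p P" "B1 \<in> P" "B2 \<in> P" "B1 \<noteq> B2" shows "B1 \<inter> B2 = {}"
proof -
  have "\<forall>B1\<in>P. \<forall>B2\<in>P. B1 \<noteq> B2 \<longrightarrow> B1 \<inter> B2 = {}"
    using assms(1) unfolding admissible_partition_def is_partition_def by (elim conjE)
  then show ?thesis using assms(2-4) by simp
qed
lemma adm_cov: "admissible_partition S n m l p P \<Longrightarrow> \<Union>P = cs_vertices n m l p"
  unfolding admissible_partition_def is_partition_def by (elim conjE)
lemma adm_ne: assumes "admissible_partition S n m l p P" "B \<in> P" shows "B \<noteq> {} \<and> B \<subseteq> cs_vertices n m l p"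
proof -
  have "\<forall>B\<in>P. B \<noteq> {} \<and> B \<subseteq> cs_vertices n m l p"
    using assms(1) unfolding admissible_partition_def is_partition_def by (elim conjE)
  then show ?thesis using assms(2) by simp
qed

lemma adm_block:
  assumes adm: "admissible_partition S n m l p P" and B: "B \<in> P" "x \<in> B"
  shows "cls S n m l p x \<subseteq> B"
proof
  fix y assume "y \<in> cls S n m l p x"
  then have "(x,y) \<in> (hrel S n m l p \<union> (hrel S n m l p)\<inverse>)\<^sup>*" unfolding cls_def eqr_def by auto
  then show "y \<in> B"
  proof (induction rule: rtrancl_induct)
    case base then show ?case using B by simp
  next
    case (step y z)
    note disj = adm_disj[OF adm]
    have e: "\<And>a b. cs_edge S n m l p a b \<Longrightarrow> \<not> manifest S n m l p a \<Longrightarrow> \<exists>B\<in>P. a \<in> B \<and> b \<in> B"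
      using adm unfolding admissible_partition_def by (elim conjE) blast
    from step.hyps(2) show ?case
    proof
      assume "(y,z) \<in> hrel S n m l p"
      then obtain B' where "B' \<in> P" "y \<in> B'" "z \<in> B'" using e unfolding hrel_def by blast
      then show ?thesis using disj[OF B(1) \<open>B' \<in> P\<close>] step.IH by blast
    next
      assume "(y,z) \<in> (hrel S n m l p)\<inverse>"
      then obtain B' where "B' \<in> P" "y \<in> B'" "z \<in> B'" using e unfolding hrel_def by blast
      then show ?thesis using disj[OF B(1) \<open>B' \<in> P\<close>] step.IH by blast
    qed
  qed
qed

lemma finp_adm: "admissible_partition S n m l p (finp S n m l p)"
  unfolding admissible_partition_def is_partition_def finp_def
proof (intro conjI allI impI ballI)
  fix B assume "B \<in> cls S n m l p ` cs_vertices n m l p"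
  then obtain x where x: "x \<in> cs_vertices n m l p" "B = cls S n m l p x" by (rule imageE)
  show "B \<noteq> {}" using x cls_self by fast
  show "B \<subseteq> cs_vertices n m l p" using x cls_V by simp
next
  show "\<Union> (cls S n m l p ` cs_vertices n m l p) = cs_vertices n m l p"
  proof
    show "\<Union> (cls S n m l p ` cs_vertices n m l p) \<subseteq> cs_vertices n m l p"
      using cls_V by (simp add: UN_least)
    show "cs_vertices n m l p \<subseteq> \<Union> (cls S n m l p ` cs_vertices n m l p)"
    proof
      fix x assume "x \<in> cs_vertices n m l p"
      then show "x \<in> \<Union> (cls S n m l p ` cs_vertices n m l p)" using cls_self[of x] by (rule UN_I)
    qed
  qed
next
  fix B1 B2 assume b1: "B1 \<in> cls S n m l p ` cs_vertices n m l p" and b2: "B2 \<in> cls S n m l p ` cs_vertices n m l p"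
    and ne: "B1 \<noteq> B2"
  obtain x where x: "B1 = cls S n m l p x" using b1 by blast
  obtain y where y: "B2 = cls S n m l p y" using b2 by blast
  show "B1 \<inter> B2 = {}"
  proof (rule ccontr)
    assume "B1 \<inter> B2 \<noteq> {}"
    then obtain z where z: "z \<in> cls S n m l p x" "z \<in> cls S n m l p y" using x y by blast
    have "cls S n m l p z = cls S n m l p x" using cls_eq[OF z(1)] .
    moreover have "cls S n m l p z = cls S n m l p y" using cls_eq[OF z(2)] .
    ultimately show False using ne x y by simp
  qed
next
  fix a b assume e: "cs_edge S n m l p a b" and ns: "\<not> (\<exists>B\<in>cls S n m l p ` cs_vertices n m l p. a \<in> B \<and> b \<in> B)"
  show "manifest S n m l p a"
  proof (rule ccontr)
    assume "\<not> manifest S n m l p a"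
    then have "(a,b) \<in> hrel S n m l p" using e unfolding hrel_def by simp
    then have "(a,b) \<in> eqr S n m l p" unfolding eqr_def by (intro r_into_rtrancl) (rule UnI1)
    then have "b \<in> cls S n m l p a" unfolding cls_def by (rule Image_singleton_iff[THEN iffD2])
    moreover have "cls S n m l p a \<in> cls S n m l p ` cs_vertices n m l p" using cs_edge_V[OF e] by simp
    ultimately have "\<exists>B\<in>cls S n m l p ` cs_vertices n m l p. a \<in> B \<and> b \<in> B"
      using cls_self[of a S n m l p] by (intro bexI[of _ "cls S n m l p a"]) simp_all
    then show False using ns by simp
  qed
qed
lemma finp_finite: "finite (finp S n m l p)"
  unfolding finp_def using finite_V by (rule finite_imageI)

lemma adm_fx:
  assumes adm: "admissible_partition S n m l p P" and B: "B \<in> P" "x \<in> B"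
  shows "(THE B. B \<in> P \<and> cls S n m l p x \<subseteq> B) = B"
proof (rule the_equality)
  show "B \<in> P \<and> cls S n m l p x \<subseteq> B" using adm_block[OF adm B] B(1) by (rule conjI[rotated])
next
  fix B' assume h: "B' \<in> P \<and> cls S n m l p x \<subseteq> B'"
  show "B' = B"
  proof (rule ccontr)
    assume ne: "B' \<noteq> B"
    have "B' \<inter> B = {}" using adm_disj[OF adm _ B(1) ne] h by simp
    moreover have "x \<in> B'" using h cls_self[of x S n m l p] by (elim conjE) (rule subsetD)
    ultimately show False using B(2) by (simp add: disjoint_iff)
  qed
qed

lemma adm_le:
  assumes adm: "admissible_partition S n m l p P"
  shows "P = (\<lambda>C. THE B. B \<in> P \<and> C \<subseteq> B) ` finp S n m l p"
proof
  show "P \<subseteq> (\<lambda>C. THE B. B \<in> P \<and> C \<subseteq> B) ` finp S n m l p"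
  proof
    fix B assume B: "B \<in> P"
    have "B \<noteq> {}" using adm_ne[OF adm B] by simp
    then obtain x where x: "x \<in> B" by blast
    have V: "x \<in> cs_vertices n m l p" using adm_ne[OF adm B] x by blast
    have "B = (THE B. B \<in> P \<and> cls S n m l p x \<subseteq> B)" using adm_fx[OF adm B x] by simp
    moreover have "cls S n m l p x \<in> finp S n m l p" unfolding finp_def using V by (rule imageI)
    ultimately show "B \<in> (\<lambda>C. THE B. B \<in> P \<and> C \<subseteq> B) ` finp S n m l p" by (rule image_eqI)
  qed
next
  show "(\<lambda>C. THE B. B \<in> P \<and> C \<subseteq> B) ` finp S n m l p \<subseteq> P"
  proof
    fix B assume "B \<in> (\<lambda>C. THE B. B \<in> P \<and> C \<subseteq> B) ` finp S n m l p"
    then obtain C where C: "C \<in> finp S n m l p" "B = (THE B. B \<in> P \<and> C \<subseteq> B)" by (rule imageE)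
    from C(1) obtain x where x1: "x \<in> cs_vertices n m l p" "C = cls S n m l p x" unfolding finp_def by (rule imageE)
    have x: "x \<in> cs_vertices n m l p" "B = (THE B. B \<in> P \<and> cls S n m l p x \<subseteq> B)"
      using x1 C(2) by simp_all
    have "x \<in> \<Union>P" using x(1) adm_cov[OF adm] by simp
    then obtain B' where B': "B' \<in> P" "x \<in> B'" by (rule UnionE)
    show "B \<in> P" using adm_fx[OF adm B'] x(2) B'(1) by simp
  qed
qed

lemma finp_max: "max_admissible_partition S n m l p (finp S n m l p)"
  unfolding max_admissible_partition_def
proof (intro conjI allI impI)
  show "admissible_partition S n m l p (finp S n m l p)" by (rule finp_adm)
  fix P' assume "admissible_partition S n m l p P'"
  then have "P' = (\<lambda>C. THE B. B \<in> P' \<and> C \<subseteq> B) ` finp S n m l p" by (rule adm_le)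
  then show "card P' \<le> card (finp S n m l p)"
    using card_image_le[OF finp_finite] by metis
qed

lemma max_unique:
  assumes mx: "max_admissible_partition S n m l p P"
  shows "P = finp S n m l p"
proof -
  have adm: "admissible_partition S n m l p P" using mx unfolding max_admissible_partition_def by (elim conjE)
  have cge: "card (finp S n m l p) \<le> card P"
  proof -
    have "\<forall>P'. admissible_partition S n m l p P' \<longrightarrow> card P' \<le> card P"
      using mx unfolding max_admissible_partition_def by (elim conjE)
    then show ?thesis using finp_adm by simp
  qed
  define f where "f = (\<lambda>C. THE B. B \<in> P \<and> C \<subseteq> B)"
  have Pf: "P = f ` finp S n m l p" using adm_le[OF adm] unfolding f_def .
  have fx: "f (cls S n m l p x) = B" if "B \<in> P" "x \<in> B" for B x
    unfolding f_def by (rule adm_fx[OF adm that])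
  have "card (f ` finp S n m l p) = card (finp S n m l p)"
    using cge Pf card_image_le[OF finp_finite[of S n m l p], of f] by simp
  then have inj: "inj_on f (finp S n m l p)" using eq_card_imp_inj_on finp_finite by metis
  have blk: "B = cls S n m l p x" if Bx: "B \<in> P" "x \<in> B" for B x
  proof
    show "cls S n m l p x \<subseteq> B" using adm_block[OF adm Bx] .
    show "B \<subseteq> cls S n m l p x"
    proof
      fix y assume y: "y \<in> B"
      have V: "x \<in> cs_vertices n m l p" "y \<in> cs_vertices n m l p"
        using adm_ne[OF adm Bx(1)] Bx(2) y by auto
      have "f (cls S n m l p y) = f (cls S n m l p x)" using fx[OF Bx(1) y] fx[OF Bx] by simp
      then have "cls S n m l p y = cls S n m l p x"
        by (rule inj_onD[OF inj]) (use V in \<open>simp_all add: finp_def\<close>)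
      then show "y \<in> cls S n m l p x" using cls_self[of y S n m l p] by simp
    qed
  qed
  show ?thesis
  proof
    show "P \<subseteq> finp S n m l p"
    proof
      fix B assume B: "B \<in> P"
      have "B \<noteq> {}" using adm_ne[OF adm B] by simp
      then obtain x where x: "x \<in> B" by blast
      have V: "x \<in> cs_vertices n m l p" using adm_ne[OF adm B] x by blast
      show "B \<in> finp S n m l p" unfolding finp_def blk[OF B x] using V by (rule imageI)
    qed
  next
    show "finp S n m l p \<subseteq> P"
    proof
      fix C assume "C \<in> finp S n m l p"
      then obtain x where x: "x \<in> cs_vertices n m l p" "C = cls S n m l p x" unfolding finp_def by (rule imageE)
      have "x \<in> \<Union>P" using x(1) adm_cov[OF adm] by simp
      then obtain B where B: "B \<in> P" "x \<in> B" by (rule UnionE)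
      show "C \<in> P" using blk[OF B] B x(2) by simp
    qed
  qed
qed

lemma subsystem_unique: "\<exists>!G. is_subsystem_structure S n m l p G"
proof (rule ex1I)
  let ?P = "finp S n m l p"
  let ?G = "(?P, {(B1, B2). B1 \<in> ?P \<and> B2 \<in> ?P \<and> (\<exists>a\<in>B1. \<exists>b\<in>B2. cs_edge S n m l p a b)})"
  show "is_subsystem_structure S n m l p ?G"
    unfolding is_subsystem_structure_def by (rule exI[of _ ?P]) (simp add: finp_max)
  fix G assume "is_subsystem_structure S n m l p G"
  then obtain P where P: "max_admissible_partition S n m l p P"
     "G = (P, {(B1, B2). B1 \<in> P \<and> B2 \<in> P \<and> (\<exists>a\<in>B1. \<exists>b\<in>B2. cs_edge S n m l p a b)})"
    unfolding is_subsystem_structure_def by blast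
  then show "G = ?G" using max_unique[OF P(1)] by simp
qed



lemma sub_mat_dims[simp]: "dim_row (sub_mat M r0 c0 r c) = r" "dim_col (sub_mat M r0 c0 r c) = c"
  by (simp_all add: sub_mat_def)

lemma sub_mat_carrier[simp]: "sub_mat M r0 c0 r c \<in> carrier_mat r c"
  by (simp add: sub_mat_def)

lemma sub_mat_index[simp]: "i < r \<Longrightarrow> j < c \<Longrightarrow> sub_mat M r0 c0 r c $$ (i,j) = M $$ (i + r0, j + c0)"
  by (simp add: sub_mat_def)

lemma sub_mat_whole: "M \<in> carrier_mat a b \<Longrightarrow> sub_mat M 0 0 a b = M"
  by (rule eq_matI) auto

lemma sub_mat_mult:
  assumes X: "X \<in> carrier_mat a b" and Y: "Y \<in> carrier_mat b c"
    and r: "r0 + r \<le> a" and cc: "c0 + cc \<le> c"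
  shows "sub_mat (X * Y) r0 c0 r cc = sub_mat X r0 0 r b * sub_mat Y 0 c0 b cc"
  by (rule eq_matI) (use X Y r cc in \<open>auto simp: scalar_prod_def intro!: sum.cong\<close>)

lemma sum_split_nat: "(\<Sum>t\<in>{0..<a+(k::nat)}. f t) = (\<Sum>t\<in>{0..<a}. f t) + (\<Sum>t\<in>{0..<k}. f (t + a))"
  by (induction k) (auto simp: add.commute add.left_commute)

lemma mult_split:
  assumes X: "X \<in> carrier_mat a (q + k)" and Y: "Y \<in> carrier_mat (q + k) c"
  shows "X * Y = sub_mat X 0 0 a q * sub_mat Y 0 0 q c + sub_mat X 0 q a k * sub_mat Y q 0 k c"
proof (rule eq_matI)
  fix i j assume ij: "i < dim_row (sub_mat X 0 0 a q * sub_mat Y 0 0 q c + sub_mat X 0 q a k * sub_mat Y q 0 k c)"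
    "j < dim_col (sub_mat X 0 0 a q * sub_mat Y 0 0 q c + sub_mat X 0 q a k * sub_mat Y q 0 k c)"
  then have i: "i < a" and j: "j < c" by auto
  have "(X * Y) $$ (i,j) = (\<Sum>t\<in>{0..<q+k}. X $$ (i,t) * Y $$ (t,j))"
    using X Y i j by (simp add: scalar_prod_def)
  also have "\<dots> = (\<Sum>t\<in>{0..<q}. X $$ (i,t) * Y $$ (t,j)) + (\<Sum>t\<in>{0..<k}. X $$ (i,t+q) * Y $$ (t+q,j))"
    by (rule sum_split_nat)
  finally show "(X * Y) $$ (i,j) = (sub_mat X 0 0 a q * sub_mat Y 0 0 q c + sub_mat X 0 q a k * sub_mat Y q 0 k c) $$ (i,j)"
    using i j by (simp add: scalar_prod_def)
qed (use X Y in auto)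

definition vtop :: "nat \<Rightarrow> 'a vec \<Rightarrow> 'a vec" where "vtop q v = vec q (\<lambda>i. v $ i)"
definition vbot :: "nat \<Rightarrow> nat \<Rightarrow> 'a vec \<Rightarrow> 'a vec" where "vbot q k v = vec k (\<lambda>i. v $ (i + q))"

lemma vtop_carrier[simp]: "vtop q v \<in> carrier_vec q" and vbot_carrier[simp]: "vbot q k v \<in> carrier_vec k"
  by (simp_all add: vtop_def vbot_def)

lemma mult_vec_split:
  assumes X: "X \<in> carrier_mat a (q + k)" and v: "v \<in> carrier_vec (q + k)"
  shows "X *\<^sub>v v = sub_mat X 0 0 a q *\<^sub>v vtop q v + sub_mat X 0 q a k *\<^sub>v vbot q k v"
proof (rule eq_vecI)
  fix i assume "i < dim_vec (sub_mat X 0 0 a q *\<^sub>v vtop q v + sub_mat X 0 q a k *\<^sub>v vbot q k v)"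
  then have i: "i < a" by auto
  have "(X *\<^sub>v v) $ i = (\<Sum>t\<in>{0..<q+k}. X $$ (i,t) * v $ t)"
    using X v i by (simp add: scalar_prod_def)
  also have "\<dots> = (\<Sum>t\<in>{0..<q}. X $$ (i,t) * v $ t) + (\<Sum>t\<in>{0..<k}. X $$ (i,t+q) * v $ (t+q))"
    by (rule sum_split_nat)
  finally show "(X *\<^sub>v v) $ i = (sub_mat X 0 0 a q *\<^sub>v vtop q v + sub_mat X 0 q a k *\<^sub>v vbot q k v) $ i"
    using i by (simp add: scalar_prod_def vtop_def vbot_def)
qed (use X v in auto)

lemma invertible_det: assumes A: "A \<in> carrier_mat n n" and inv: "invertible_mat A"
  shows "det A \<noteq> 0"
proof -
  obtain B where AB: "A * B = 1\<^sub>m n" and BA: "B * A = 1\<^sub>m (dim_row B)"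
    using inv A unfolding invertible_mat_def inverts_mat_def by auto
  have "dim_col B = n" using AB A by (metis dim_col_mat(1) index_mult_mat(3) index_one_mat(3))
  moreover have "dim_row B = n" using BA A by (metis index_mult_mat(3) index_one_mat(3) carrier_matD(2))
  ultimately have B: "B \<in> carrier_mat n n" by auto
  have "det A * det B = 1" using det_mult[OF A B] AB by simp
  then show ?thesis by auto
qed

lemma minv_ok: assumes A: "(A :: 'a :: field mat) \<in> carrier_mat n n" and d: "det A \<noteq> 0"
  shows "minv A \<in> carrier_mat n n" "A * minv A = 1\<^sub>m n" "minv A * A = 1\<^sub>m n"
proof -
  have U: "A \<in> Units (ring_mat TYPE('a) n ())" by (rule det_non_zero_imp_unit[OF A d])
  have "mat_inverse A \<noteq> None"
  proof
    assume "mat_inverse A = None"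
    from mat_inverse(1)[OF A this, of "()"] U show False by simp
  qed
  then obtain B where "mat_inverse A = Some B" by auto
  then have "minv A = B" "A * B = 1\<^sub>m n \<and> B * A = 1\<^sub>m n \<and> B \<in> carrier_mat n n"
    using mat_inverse(2)[OF A] unfolding minv_def by auto
  then show "minv A \<in> carrier_mat n n" "A * minv A = 1\<^sub>m n" "minv A * A = 1\<^sub>m n" by auto
qed

lemma minv_unique: assumes A: "(A :: 'a :: field mat) \<in> carrier_mat n n" and B: "B \<in> carrier_mat n n"
  and AB: "A * B = 1\<^sub>m n"
  shows "minv A = B"
proof -
  have "det A * det B = 1" using det_mult[OF A B] AB by simp
  then have d: "det A \<noteq> 0" by auto
  note mi = minv_ok[OF A d]
  have "minv A = minv A * 1\<^sub>m n" using mi(1) by (rule right_mult_one_mat[symmetric])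
  also have "\<dots> = minv A * (A * B)" using AB by simp
  also have "\<dots> = (minv A * A) * B" using mi(1) A B by (rule assoc_mult_mat[symmetric])
  also have "\<dots> = B" using mi(3) B by simp
  finally show ?thesis .
qed

lemma det_inj: assumes A: "(A :: 'a :: field mat) \<in> carrier_mat n n"
  and inj: "\<And>v. v \<in> carrier_vec n \<Longrightarrow> A *\<^sub>v v = 0\<^sub>v n \<Longrightarrow> v = 0\<^sub>v n"
  shows "det A \<noteq> 0"
  using det_0_iff_vec_prod_zero_field[OF A] inj by blast

lemma cmat_mult: "A \<in> carrier_mat a b \<Longrightarrow> B \<in> carrier_mat b c \<Longrightarrow> cmat (A * B) = cmat A * cmat B"
  unfolding cmat_def by (rule of_real_hom.mat_hom_mult)

lemma cmat_carrier[simp]: "A \<in> carrier_mat a b \<Longrightarrow> cmat A \<in> carrier_mat a b"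
  by (simp add: cmat_def)

lemma cmat_one[simp]: "cmat (1\<^sub>m n) = 1\<^sub>m n"
  unfolding cmat_def by (rule eq_matI) auto

lemma cmat_add: "A \<in> carrier_mat a b \<Longrightarrow> B \<in> carrier_mat a b \<Longrightarrow> cmat (A + B) = cmat A + cmat B"
  unfolding cmat_def by (rule eq_matI) auto

lemma rank_le_nr: assumes A: "(A :: 'a :: field mat) \<in> carrier_mat nr nc"
  shows "vec_space.rank nr A \<le> nr"
proof -
  interpret vec_space "TYPE('a)" nr .
  have e: "lin_indpt {}" by (unfold lin_dep_def) auto
  obtain S where S: "maximal S (\<lambda>T. T \<subseteq> set (cols A) \<and> lin_indpt T)"
    using maximal_exists_superset[of "set (cols A)" "(\<lambda>T. T \<subseteq> set (cols A) \<and> lin_indpt T)" "{}"] e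
    by auto
  have r: "rank A = card S" by (rule rank_card_indpt[OF A S])
  have "S \<subseteq> set (cols A)" "lin_indpt S" using S unfolding maximal_def by auto
  moreover have "set (cols A) \<subseteq> carrier_vec nr" using A cols_dim by blast
  ultimately have "card S \<le> dim" using li_le_dim(2)[OF fin_dim] by auto
  then show ?thesis using r dim_is_n by simp
qed

lemma char_finite: assumes M: "(M :: complex mat) \<in> carrier_mat k k"
  shows "finite {s. det (s \<cdot>\<^sub>m 1\<^sub>m k - M) = 0}"
proof -
  have eq: "det (s \<cdot>\<^sub>m 1\<^sub>m k - M) = poly (char_poly M) s" for s
  proof -
    have "s \<cdot>\<^sub>m 1\<^sub>m k - M = - (char_matrix M s)"
      by (rule eq_matI) (use M in \<open>auto simp: char_matrix_def\<close>)
    then show ?thesis using char_poly_matrix[OF M] by simp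
  qed
  have "char_poly M \<noteq> 0" using degree_monic_char_poly[OF M] by auto
  then show ?thesis unfolding eq using poly_roots_finite by blast
qed



lemma vbot_mult: assumes X: "X \<in> carrier_mat (q + r) c" and v: "v \<in> carrier_vec c"
  shows "vbot q r (X *\<^sub>v v) = sub_mat X q 0 r c *\<^sub>v v"
  by (rule eq_vecI) (use X v in \<open>auto simp: vbot_def scalar_prod_def intro!: sum.cong\<close>)

lemma mult_unit_col: assumes X: "(X :: 'a :: semiring_1 mat) \<in> carrier_mat a c" and j: "j < c"
  shows "X *\<^sub>v unit_vec c j = col X j"
proof (rule eq_vecI)
  fix i assume "i < dim_vec (col X j)"
  then have i: "i < a" using X by simp
  have "row X i \<bullet> unit_vec c j = row X i $ j" by (rule scalar_prod_right_unit[OF j])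
  then show "(X *\<^sub>v unit_vec c j) $ i = col X j $ i" using X i j by simp
qed (use X in simp)

lemma mult_zero_vec': "A \<in> carrier_mat a b \<Longrightarrow> A *\<^sub>v 0\<^sub>v b = 0\<^sub>v a"
  by (rule eq_vecI) auto

lemma mat_eq_cols: assumes X: "(X :: 'a :: semiring_1 mat) \<in> carrier_mat a c" and Y: "Y \<in> carrier_mat a c"
  and h: "\<And>j. j < c \<Longrightarrow> X *\<^sub>v unit_vec c j = Y *\<^sub>v unit_vec c j"
  shows "X = Y"
proof (rule eq_matI)
  fix i j assume i: "i < dim_row Y" and j: "j < dim_col Y"
  have "col X j = col Y j" using h[of j] j Y mult_unit_col[OF X] mult_unit_col[OF Y] by auto
  then have "col X j $ i = col Y j $ i" by simp
  then show "X $$ (i,j) = Y $$ (i,j)" using i j X Y by auto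
qed (use X Y in auto)

lemma sub3: assumes X: "X \<in> carrier_mat n n" and A: "A \<in> carrier_mat n n" and Y: "Y \<in> carrier_mat n n"
  and r: "r0 + r \<le> n" and c: "c0 + c \<le> n"
  shows "sub_mat (X * A * Y) r0 c0 r c = sub_mat X r0 0 r n * A * sub_mat Y 0 c0 n c"
proof -
  have "sub_mat (X * A * Y) r0 c0 r c = sub_mat (X * A) r0 0 r n * sub_mat Y 0 c0 n c"
    by (rule sub_mat_mult) (use X A Y r c in auto)
  also have "sub_mat (X * A) r0 0 r n = sub_mat X r0 0 r n * sub_mat A 0 0 n n"
    by (rule sub_mat_mult) (use X A r in auto)
  finally show ?thesis using sub_mat_whole[OF A] by simp
qed

lemma sub2: assumes X: "X \<in> carrier_mat n n" and B: "B \<in> carrier_mat n m" and r: "r0 + r \<le> n"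
  shows "sub_mat (X * B) r0 0 r m = sub_mat X r0 0 r n * B"
  using sub_mat_mult[OF X B r, of 0 m] sub_mat_whole[OF B] by simp

lemma vbot_minus: assumes "a \<in> carrier_vec (q + r)" "b \<in> carrier_vec (q + r)"
  shows "vbot q r (a - b) = vbot q r a - vbot q r b"
  by (rule eq_vecI) (use assms in \<open>auto simp: vbot_def\<close>)

lemma vec_minus_zero_eq: assumes "(a :: 'a :: ab_group_add vec) - b = 0\<^sub>v n" "a \<in> carrier_vec n" "b \<in> carrier_vec n"
  shows "a = b"
proof (rule eq_vecI)
  fix i assume "i < dim_vec b"
  then have "(a - b) $ i = 0" using assms by simp
  then show "a $ i = b $ i" using assms(2,3) \<open>i < dim_vec b\<close> by simp
qed (use assms in simp)

lemma zero_mult_vec': "v \<in> carrier_vec b \<Longrightarrow> 0\<^sub>m a b *\<^sub>v v = 0\<^sub>v a"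
  by (rule eq_vecI) auto

lemma sim_core:
  fixes M :: "'a :: field mat"
  assumes R: "R \<in> carrier_mat k k" and Ri: "Ri \<in> carrier_mat k k" and RRi: "R * Ri = 1\<^sub>m k"
    and RiR: "Ri * R = 1\<^sub>m k" and M: "M \<in> carrier_mat k k" and d: "det (s \<cdot>\<^sub>m 1\<^sub>m k - M) \<noteq> 0"
    and X: "X \<in> carrier_mat a k" and Y: "Y \<in> carrier_mat k b"
  shows "(X * R) * minv (s \<cdot>\<^sub>m 1\<^sub>m k - Ri * M * R) * (Ri * Y) = X * minv (s \<cdot>\<^sub>m 1\<^sub>m k - M) * Y"
proof -
  define A where "A = s \<cdot>\<^sub>m 1\<^sub>m k - M"
  have A: "A \<in> carrier_mat k k" unfolding A_def using M by (rule minus_carrier_mat)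
  define Mi where "Mi = minv A"
  have Mi: "Mi \<in> carrier_mat k k" "A * Mi = 1\<^sub>m k" "Mi * A = 1\<^sub>m k"
    using minv_ok[OF A d[folded A_def]] unfolding Mi_def by auto
  have one: "s \<cdot>\<^sub>m 1\<^sub>m k \<in> carrier_mat k k" by simp
  have "Ri * A = Ri * (s \<cdot>\<^sub>m 1\<^sub>m k) - Ri * M" unfolding A_def by (rule mult_minus_distrib_mat[OF Ri one M])
  also have "Ri * (s \<cdot>\<^sub>m 1\<^sub>m k) = s \<cdot>\<^sub>m Ri" using mult_smult_distrib[OF Ri one_carrier_mat] Ri by simp
  finally have e1: "Ri * A = s \<cdot>\<^sub>m Ri - Ri * M" .
  have "Ri * A * R = (s \<cdot>\<^sub>m Ri - Ri * M) * R" using e1 by simp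
  also have "\<dots> = (s \<cdot>\<^sub>m Ri) * R - Ri * M * R"
    by (rule minus_mult_distrib_mat) (use Ri M R in auto)
  also have "(s \<cdot>\<^sub>m Ri) * R = s \<cdot>\<^sub>m 1\<^sub>m k" using mult_smult_assoc_mat[OF Ri R] RiR by simp
  finally have eqA: "s \<cdot>\<^sub>m 1\<^sub>m k - Ri * M * R = Ri * A * R" by simp
  have "(Ri * A * R) * (Ri * Mi * R) = Ri * A * (R * Ri) * Mi * R"
    using Ri A R Mi by (simp add: assoc_mult_mat[of _ k k _ k _ k])
  also have "\<dots> = Ri * (A * Mi) * R"
    using Ri A R Mi RRi by (simp add: assoc_mult_mat[of _ k k _ k _ k])
  also have "\<dots> = 1\<^sub>m k" using Mi RiR Ri R by simp
  finally have "minv (Ri * A * R) = Ri * Mi * R"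
    by (intro minv_unique[of _ k]) (use Ri A R Mi in auto)
  then have mi: "minv (s \<cdot>\<^sub>m 1\<^sub>m k - Ri * M * R) = Ri * Mi * R" using eqA by simp
  have "(X * R) * (Ri * Mi * R) * (Ri * Y) = X * (R * Ri) * Mi * (R * Ri) * Y"
    using X R Ri Mi Y by (simp add: assoc_mult_mat[of _ a k _ k _ k] assoc_mult_mat[of _ a k _ k _ b]
      assoc_mult_mat[of _ k k _ k _ b] assoc_mult_mat[of _ k k _ k _ k])
  also have "\<dots> = X * Mi * Y" using X Mi Y RRi by simp
  finally show ?thesis unfolding mi Mi_def A_def .
qed


definition Dhf :: "nat \<Rightarrow> complex mat \<Rightarrow> complex mat" where
  "Dhf q W = mat q q (\<lambda>(i,j). if i = j then W $$ (i,j) else 0)"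
definition gQ :: "nat \<Rightarrow> complex mat \<Rightarrow> complex \<Rightarrow> complex mat" where
  "gQ q W s = minv (s \<cdot>\<^sub>m 1\<^sub>m q - Dhf q W) * (W - Dhf q W)"
definition gPD :: "nat \<Rightarrow> complex mat \<Rightarrow> complex mat \<Rightarrow> real mat \<Rightarrow> complex \<Rightarrow> complex mat" where
  "gPD q W V D1 s = minv (s \<cdot>\<^sub>m 1\<^sub>m q - Dhf q W) * V + (1\<^sub>m q - gQ q W s) * cmat D1"

lemma schur_det:
  fixes C :: "'a :: field mat"
  assumes C: "C \<in> carrier_mat q q" and dC: "det C \<noteq> 0" and cc: "cc \<in> carrier_mat q 1"
    and rr: "rr \<in> carrier_mat 1 q" and dd: "dd \<in> carrier_mat 1 1"
  shows "det (four_block_mat C cc rr dd) = det C * (rr * - (minv C * cc) + dd) $$ (0,0)"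
proof -
  note Ci = minv_ok[OF C dC]
  define X where "X = minv C * cc"
  have X: "X \<in> carrier_mat q 1" unfolding X_def using Ci(1) cc by simp
  define U where "U = four_block_mat (1\<^sub>m q) (- X) (0\<^sub>m 1 q) (1\<^sub>m 1)"
  have U: "U \<in> carrier_mat (q + 1) (q + 1)" unfolding U_def by (rule four_block_carrier_mat) auto
  have dU: "det U = 1" unfolding U_def
    by (subst det_four_block_mat_lower_left_zero[of _ q _ 1]) (use X in auto)
  have M: "four_block_mat C cc rr dd \<in> carrier_mat (q + 1) (q + 1)"
    by (rule four_block_carrier_mat[OF C dd])
  have "four_block_mat C cc rr dd * U = four_block_mat (C * 1\<^sub>m q + cc * 0\<^sub>m 1 q) (C * - X + cc * 1\<^sub>m 1)
      (rr * 1\<^sub>m q + dd * 0\<^sub>m 1 q) (rr * - X + dd * 1\<^sub>m 1)"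
    unfolding U_def by (rule mult_four_block_mat) (use C cc rr dd X in auto)
  also have "C * - X + cc * 1\<^sub>m 1 = 0\<^sub>m q 1"
  proof -
    have "C * X = (C * minv C) * cc" unfolding X_def by (rule assoc_mult_mat[OF C Ci(1) cc, symmetric])
    then have "C * X = cc" using Ci(2) cc by simp
    moreover have "C * - X = - (C * X)" by (rule uminus_mult_right_mat) (use C X in auto)
    ultimately show ?thesis using cc by simp
  qed
  also have "C * 1\<^sub>m q + cc * 0\<^sub>m 1 q = C" using C cc by (simp add: right_mult_zero_mat)
  also have "rr * 1\<^sub>m q + dd * 0\<^sub>m 1 q = rr" using rr dd by (simp add: right_mult_zero_mat)
  finally have MU: "four_block_mat C cc rr dd * U = four_block_mat C (0\<^sub>m q 1) rr (rr * - X + dd * 1\<^sub>m 1)" .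
  have "det (four_block_mat C cc rr dd * U) = det C * det (rr * - X + dd * 1\<^sub>m 1)"
    unfolding MU by (rule det_four_block_mat_upper_right_zero[OF C refl rr]) (use rr X dd in auto)
  also have "det (rr * - X + dd * 1\<^sub>m 1) = (rr * - X + dd) $$ (0,0)"
    by (subst det_single) (use rr X dd in auto)
  finally have "det (four_block_mat C cc rr dd) * det U = det C * (rr * - X + dd) $$ (0,0)"
    using det_mult[OF M U] by simp
  then show ?thesis using dU unfolding X_def by simp
qed

lemma pick_prefix: assumes a: "a < q" and i: "q \<le> i"
  shows "pick ({..<q} \<union> {i}) a = a"
proof -
  have "{x \<in> {..<q} \<union> {i}. x < a} = {..<a}" using a i by auto
  then have "card {x \<in> {..<q} \<union> {i}. x < a} = a" by simp
  then show ?thesis using pick_card_in_set[of a "{..<q} \<union> {i}"] a by simp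
qed

lemma pick_last: assumes i: "q \<le> i"
  shows "pick ({..<q} \<union> {i}) q = i"
proof -
  have "{x \<in> {..<q} \<union> {i}. x < i} = {..<q}" using i by auto
  then have "card {x \<in> {..<q} \<union> {i}. x < i} = q" by simp
  then show ?thesis using pick_card_in_set[of i "{..<q} \<union> {i}"] by simp
qed

lemma card_prefix: assumes "q \<le> i" "i < r"
  shows "card {a. a < r \<and> a \<in> {..<q} \<union> {i}} = q + 1"
proof -
  have "{a. a < r \<and> a \<in> {..<q} \<union> {i}} = insert i {..<q}" using assms by auto
  then show ?thesis using assms by simp
qed

locale sigctx =
  fixes S :: gss and n m l p :: nat
  assumes wf: "gss_wf S n m l p" and C11inv: "invertible_mat (gss_C11 S)"
begin

abbreviation "Co \<equiv> gss_Co S"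
abbreviation "Ao \<equiv> gss_Ao S"
abbreviation "Bo \<equiv> gss_Bo S"
abbreviation "Do \<equiv> gss_Do S"
abbreviation "p1 \<equiv> gss_p1 S"
abbreviation "k \<equiv> n - gss_p1 S"
abbreviation "C11 \<equiv> sub_mat (gss_Co S) 0 0 (gss_p1 S) (gss_p1 S)"
abbreviation "C12 \<equiv> sub_mat (gss_Co S) 0 (gss_p1 S) (gss_p1 S) (n - gss_p1 S)"
abbreviation "Cr \<equiv> sub_mat (gss_Co S) 0 0 (gss_p1 S) n"
abbreviation "Ci \<equiv> minv (sub_mat (gss_Co S) 0 0 (gss_p1 S) (gss_p1 S))"

lemma Co_carrier: "Co \<in> carrier_mat p n"
  using wf unfolding gss_wf_def gss_Co_def carrier_mat_def by auto
lemma Ao_carrier: "Ao \<in> carrier_mat n n"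
  using wf unfolding gss_wf_def gss_Ao_def carrier_mat_def by auto
lemma Bo_carrier: "Bo \<in> carrier_mat n m"
  using wf unfolding gss_wf_def gss_Bo_def carrier_mat_def by auto
lemma Do_carrier: "Do \<in> carrier_mat p m"
  using wf unfolding gss_wf_def gss_Do_def carrier_mat_def by auto

lemma p1n: "p1 \<le> n"
proof -
  have "dim_row Co = p" using Co_carrier by auto
  then show ?thesis unfolding gss_p1_def using vec_space.rank_le_nc[OF Co_carrier] by simp
qed

lemma p1p: "p1 \<le> p"
proof -
  have "dim_row Co = p" using Co_carrier by auto
  then show ?thesis unfolding gss_p1_def using rank_le_nr[OF Co_carrier] by simp
qed

lemma nsplit: "n = p1 + k" using p1n by simp

lemma dC11: "det C11 \<noteq> 0"
  using invertible_det[OF sub_mat_carrier C11inv[unfolded gss_C11_def]] .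

lemma Ci: "Ci \<in> carrier_mat p1 p1" "C11 * Ci = 1\<^sub>m p1" "Ci * C11 = 1\<^sub>m p1"
  using minv_ok[OF _ dC11] by auto

lemma Cr_carrier: "Cr \<in> carrier_mat p1 (p1 + k)"
  using nsplit by simp

lemma Cr_blocks: "sub_mat Cr 0 0 p1 p1 = C11" "sub_mat Cr 0 p1 p1 k = C12"
  by (rule eq_matI; use p1n in simp)+

lemma kerCr: assumes v: "v \<in> carrier_vec n" and z: "Co *\<^sub>v v = 0\<^sub>v p"
  shows "Cr *\<^sub>v v = 0\<^sub>v p1"
proof (rule eq_vecI)
  fix i assume "i < dim_vec (0\<^sub>v p1 :: real vec)"
  then have i: "i < p1" by simp
  have "(Cr *\<^sub>v v) $ i = (Co *\<^sub>v v) $ i"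
    using i p1p Co_carrier v by (auto simp: scalar_prod_def intro!: sum.cong)
  then show "(Cr *\<^sub>v v) $ i = 0\<^sub>v p1 $ i" using z i p1p by simp
qed simp

lemma Cr_split: assumes v: "v \<in> carrier_vec n"
  shows "Cr *\<^sub>v v = C11 *\<^sub>v vtop p1 v + C12 *\<^sub>v vbot p1 k v"
  using mult_vec_split[OF Cr_carrier, of v] v nsplit Cr_blocks by simp

lemma Zlem: assumes v: "v \<in> carrier_vec n" and z: "Cr *\<^sub>v v = 0\<^sub>v p1" and b: "vbot p1 k v = 0\<^sub>v k"
  shows "v = 0\<^sub>v n"
proof -
  have "C11 *\<^sub>v vtop p1 v = 0\<^sub>v p1"
  proof -
    have c: "C11 *\<^sub>v vtop p1 v \<in> carrier_vec p1" by (rule mult_mat_vec_carrier[OF sub_mat_carrier vtop_carrier])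
    show ?thesis using Cr_split[OF v] z b mult_zero_vec'[of C12 p1 k] right_zero_vec[OF c] by simp
  qed
  then have "Ci *\<^sub>v (C11 *\<^sub>v vtop p1 v) = 0\<^sub>v p1" using mult_zero_vec'[OF Ci(1)] by simp
  moreover have "Ci *\<^sub>v (C11 *\<^sub>v vtop p1 v) = vtop p1 v"
  proof -
    have "Ci *\<^sub>v (C11 *\<^sub>v vtop p1 v) = (Ci * C11) *\<^sub>v vtop p1 v"
      by (rule assoc_mult_mat_vec[symmetric]) (use Ci(1) in auto)
    then show ?thesis using Ci(3) by simp
  qed
  ultimately have t: "vtop p1 v = 0\<^sub>v p1" by simp
  show ?thesis
  proof (rule eq_vecI)
    fix i assume "i < dim_vec (0\<^sub>v n :: real vec)"
    then have i: "i < n" by simp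
    show "v $ i = 0\<^sub>v n $ i"
    proof (cases "i < p1")
      case True
      then have "vtop p1 v $ i = 0" using t by simp
      then show ?thesis using True i by (simp add: vtop_def)
    next
      case False
      then have "vbot p1 k v $ (i - p1) = 0" using b i by simp
      moreover have "i - p1 + p1 = i" using False by simp
      ultimately show ?thesis using False i by (simp add: vbot_def)
    qed
  qed (use v in simp)
qed


definition "EE = mat n p1 (\<lambda>(i,j). if i < p1 then Ci $$ (i,j) else 0)"

lemma EE_carrier: "EE \<in> carrier_mat n p1" unfolding EE_def by simp

context fixes N assumes kb: "kernel_basis S n N"
begin

abbreviation "N1 \<equiv> sub_mat N 0 0 p1 k"
abbreviation "N2 \<equiv> sub_mat N p1 0 k k"
abbreviation "TT \<equiv> four_block_mat C11 C12 (0\<^sub>m k p1) (minv N2)"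
abbreviation "TI \<equiv> four_block_mat Ci N1 (0\<^sub>m k p1) N2"
definition "LL = mat k n (\<lambda>(i,j). if j < p1 then 0 else minv N2 $$ (i, j - p1))"

lemma N_carrier: "N \<in> carrier_mat n k"
  using kb unfolding kernel_basis_def by (elim conjE)

lemma N_carrier': "N \<in> carrier_mat (p1 + k) k"
  using N_carrier nsplit by simp

lemma N_ker: assumes c: "c \<in> carrier_vec k" shows "Co *\<^sub>v (N *\<^sub>v c) = 0\<^sub>v p"
proof -
  have "N *\<^sub>v c \<in> mat_kernel Co" using kb c unfolding kernel_basis_def by blast
  then show ?thesis by (rule mat_kernelD(2)[OF Co_carrier])
qed

lemma N_span: assumes v: "v \<in> carrier_vec n" and z: "Co *\<^sub>v v = 0\<^sub>v p"
  shows "\<exists>c. c \<in> carrier_vec k \<and> v = N *\<^sub>v c"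
proof -
  have "v \<in> mat_kernel Co" by (rule mat_kernelI[OF Co_carrier v z])
  then show ?thesis using kb unfolding kernel_basis_def by blast
qed

lemma N_inj: assumes c: "c \<in> carrier_vec k" and z: "N *\<^sub>v c = 0\<^sub>v n" shows "c = 0\<^sub>v k"
  using kb c z unfolding kernel_basis_def by blast

lemma CrN: "Cr * N = 0\<^sub>m p1 k"
proof (rule mat_eq_cols)
  show "Cr * N \<in> carrier_mat p1 k" by (rule mult_carrier_mat[OF sub_mat_carrier N_carrier])
  show "0\<^sub>m p1 k \<in> carrier_mat p1 k" by simp
  fix j assume j: "j < k"
  have "(Cr * N) *\<^sub>v unit_vec k j = Cr *\<^sub>v (N *\<^sub>v unit_vec k j)"
    by (rule assoc_mult_mat_vec) (use N_carrier in auto)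
  also have "\<dots> = 0\<^sub>v p1"
    by (rule kerCr) (use N_carrier N_ker[of "unit_vec k j"] in auto)
  finally show "(Cr * N) *\<^sub>v unit_vec k j = 0\<^sub>m p1 k *\<^sub>v unit_vec k j"
    by (subst zero_mult_vec') auto
qed

lemma N12: "C11 * N1 + C12 * N2 = 0\<^sub>m p1 k"
  using mult_split[OF Cr_carrier N_carrier'] CrN Cr_blocks by simp

lemma vbotN: assumes c: "c \<in> carrier_vec k" shows "vbot p1 k (N *\<^sub>v c) = N2 *\<^sub>v c"
  by (rule vbot_mult[OF N_carrier' c])

lemma dN2: "det N2 \<noteq> 0"
proof (rule det_inj[OF sub_mat_carrier])
  fix c assume c: "c \<in> carrier_vec k" and z: "N2 *\<^sub>v c = 0\<^sub>v k"
  have Nc: "N *\<^sub>v c \<in> carrier_vec n" using N_carrier c by simp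
  have "Cr *\<^sub>v (N *\<^sub>v c) = 0\<^sub>v p1" by (rule kerCr[OF Nc N_ker[OF c]])
  moreover have "vbot p1 k (N *\<^sub>v c) = 0\<^sub>v k" using vbotN[OF c] z by simp
  ultimately have "N *\<^sub>v c = 0\<^sub>v n" using Zlem[OF Nc] by simp
  then show "c = 0\<^sub>v k" by (rule N_inj[OF c])
qed

lemma N2i: "minv N2 \<in> carrier_mat k k" "N2 * minv N2 = 1\<^sub>m k" "minv N2 * N2 = 1\<^sub>m k"
  using minv_ok[OF sub_mat_carrier dN2] by auto

lemma TT_carrier: "TT \<in> carrier_mat n n"
proof -
  have "TT \<in> carrier_mat (p1 + k) (p1 + k)"
    by (rule four_block_carrier_mat) (use N2i(1) in auto)
  then show ?thesis using nsplit[symmetric] by simp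
qed

lemma TI_carrier: "TI \<in> carrier_mat n n"
proof -
  have "TI \<in> carrier_mat (p1 + k) (p1 + k)"
    by (rule four_block_carrier_mat) (use Ci(1) in auto)
  then show ?thesis using nsplit[symmetric] by simp
qed

lemma TTI: "TT * TI = 1\<^sub>m n"
proof -
  have "TT * TI = four_block_mat (C11 * Ci + C12 * 0\<^sub>m k p1) (C11 * N1 + C12 * N2)
      (0\<^sub>m k p1 * Ci + minv N2 * 0\<^sub>m k p1) (0\<^sub>m k p1 * N1 + minv N2 * N2)"
    by (rule mult_four_block_mat) (use Ci(1) N2i(1) in auto)
  also have "\<dots> = four_block_mat (1\<^sub>m p1) (0\<^sub>m p1 k) (0\<^sub>m k p1) (1\<^sub>m k)"
    using Ci N2i N12 by (simp add: right_mult_zero_mat left_mult_zero_mat)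
  also have "\<dots> = 1\<^sub>m n" using nsplit by simp
  finally show ?thesis .
qed

lemma minvTT: "minv TT = TI"
  by (rule minv_unique[OF TT_carrier TI_carrier TTI])

lemma TT_top: "sub_mat TT 0 0 p1 n = Cr"
  by (rule eq_matI) (use N2i(1) p1n in auto)

lemma TT_bot: "sub_mat TT p1 0 k n = LL"
  by (rule eq_matI) (use N2i(1) p1n in \<open>auto simp: LL_def\<close>)

lemma TI_left: "sub_mat TI 0 0 n p1 = EE"
  by (rule eq_matI) (use Ci(1) p1n in \<open>auto simp: EE_def\<close>)

lemma TI_right: "sub_mat TI 0 p1 n k = N"
proof (rule eq_matI)
  fix i j assume "i < dim_row N" "j < dim_col N"
  then have i: "i < n" and j: "j < k" using N_carrier by auto
  show "sub_mat TI 0 p1 n k $$ (i, j) = N $$ (i, j)"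
  proof (cases "i < p1")
    case True then show ?thesis using i j Ci(1) p1n by simp
  next
    case False
    then have "i - p1 + p1 = i" by simp
    then show ?thesis using False i j Ci(1) p1n by simp
  qed
qed (use N_carrier in auto)


lemma A11: "sub_mat (TT * Ao * minv TT) 0 0 p1 p1 = Cr * Ao * EE"
  unfolding minvTT using sub3[OF TT_carrier Ao_carrier TI_carrier, of 0 p1 0 p1] p1n TT_top TI_left by simp
lemma A12: "sub_mat (TT * Ao * minv TT) 0 p1 p1 k = Cr * Ao * N"
  unfolding minvTT using sub3[OF TT_carrier Ao_carrier TI_carrier, of 0 p1 p1 k] p1n TT_top TI_right by simp
lemma A21: "sub_mat (TT * Ao * minv TT) p1 0 k p1 = LL * Ao * EE"
  unfolding minvTT using sub3[OF TT_carrier Ao_carrier TI_carrier, of p1 k 0 p1] p1n TT_bot TI_left by simp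
lemma A22: "sub_mat (TT * Ao * minv TT) p1 p1 k k = LL * Ao * N"
  unfolding minvTT using sub3[OF TT_carrier Ao_carrier TI_carrier, of p1 k p1 k] p1n TT_bot TI_right by simp
lemma B1: "sub_mat (TT * Bo) 0 0 p1 m = Cr * Bo"
  using sub2[OF TT_carrier Bo_carrier, of 0 p1] p1n TT_top by simp
lemma B2: "sub_mat (TT * Bo) p1 0 k m = LL * Bo"
  using sub2[OF TT_carrier Bo_carrier, of p1 k] p1n TT_bot by simp

definition "Wf s = cmat (Cr * Ao * EE) + cmat (Cr * Ao * N) * minv (s \<cdot>\<^sub>m 1\<^sub>m k - cmat (LL * Ao * N)) * cmat (LL * Ao * EE)"
definition "Vf s = cmat (Cr * Bo) + cmat (Cr * Ao * N) * minv (s \<cdot>\<^sub>m 1\<^sub>m k - cmat (LL * Ao * N)) * cmat (LL * Bo)"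

lemma dsf_eq: "dsf_data S n m p N = (\<lambda>s. gQ p1 (Wf s) s, \<lambda>s. gPD p1 (Wf s) (Vf s) (sub_mat Do 0 0 p1 m) s,
   sub_mat Co p1 0 (p - p1) p1 * Ci, sub_mat Do p1 0 (p - p1) m)"
  unfolding dsf_data_def Let_def by (simp only: A11 A12 A21 A22 B1 B2 Wf_def Vf_def gQ_def gPD_def Dhf_def)

lemma LL_carrier: "LL \<in> carrier_mat k n" unfolding LL_def by simp

end

context fixes N N' assumes kb: "kernel_basis S n N" and kb': "kernel_basis S n N'"
begin

abbreviation "R \<equiv> minv (sub_mat N p1 0 k k) * sub_mat N' p1 0 k k"
abbreviation "Ri \<equiv> minv (sub_mat N' p1 0 k k) * sub_mat N p1 0 k k"

lemma R_carrier: "R \<in> carrier_mat k k" "Ri \<in> carrier_mat k k"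
  using N2i(1)[OF kb] N2i(1)[OF kb'] by auto

lemma RRi: "R * Ri = 1\<^sub>m k" "Ri * R = 1\<^sub>m k"
proof -
  let ?A = "minv (sub_mat N p1 0 k k)" and ?B = "sub_mat N' p1 0 k k"
    and ?C = "minv (sub_mat N' p1 0 k k)" and ?D = "sub_mat N p1 0 k k"
  have c: "?A \<in> carrier_mat k k" "?B \<in> carrier_mat k k" "?C \<in> carrier_mat k k" "?D \<in> carrier_mat k k"
    using N2i(1)[OF kb] N2i(1)[OF kb'] by auto
  have "?A * ?B * (?C * ?D) = ?A * (?B * (?C * ?D))" by (rule assoc_mult_mat[OF c(1,2) mult_carrier_mat[OF c(3,4)]])
  also have "?B * (?C * ?D) = (?B * ?C) * ?D" by (rule assoc_mult_mat[OF c(2,3,4), symmetric])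
  also have "?A * ((?B * ?C) * ?D) = ?A * (?B * ?C) * ?D" by (rule assoc_mult_mat[OF c(1) mult_carrier_mat[OF c(2,3)] c(4), symmetric])
  also have "\<dots> = 1\<^sub>m k" using N2i[OF kb] N2i[OF kb'] c by simp
  finally show "R * Ri = 1\<^sub>m k" .
  have "?C * ?D * (?A * ?B) = ?C * (?D * (?A * ?B))" by (rule assoc_mult_mat[OF c(3,4) mult_carrier_mat[OF c(1,2)]])
  also have "?D * (?A * ?B) = (?D * ?A) * ?B" by (rule assoc_mult_mat[OF c(4,1,2), symmetric])
  also have "?C * ((?D * ?A) * ?B) = ?C * (?D * ?A) * ?B" by (rule assoc_mult_mat[OF c(3) mult_carrier_mat[OF c(4,1)] c(2), symmetric])
  also have "\<dots> = 1\<^sub>m k" using N2i[OF kb] N2i[OF kb'] c by simp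
  finally show "Ri * R = 1\<^sub>m k" .
qed

lemma N2R: "sub_mat N p1 0 k k * R = sub_mat N' p1 0 k k"
proof -
  have "sub_mat N p1 0 k k * R = (sub_mat N p1 0 k k * minv (sub_mat N p1 0 k k)) * sub_mat N' p1 0 k k"
    by (rule assoc_mult_mat[OF sub_mat_carrier N2i(1)[OF kb] sub_mat_carrier, symmetric])
  then show ?thesis using N2i[OF kb] by simp
qed

lemma NR: "N' = N * R"
proof (rule mat_eq_cols)
  show "N' \<in> carrier_mat n k" by (rule N_carrier[OF kb'])
  show "N * R \<in> carrier_mat n k" using N_carrier[OF kb] R_carrier by simp
  fix j assume j: "j < k"
  define c where "c = (unit_vec k j :: real vec)"
  have c: "c \<in> carrier_vec k" unfolding c_def by simp
  have Rc: "R *\<^sub>v c \<in> carrier_vec k" using R_carrier c by simp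
  define v where "v = N' *\<^sub>v c - N *\<^sub>v (R *\<^sub>v c)"
  have a: "N' *\<^sub>v c \<in> carrier_vec n" using N_carrier[OF kb'] c by simp
  have b: "N *\<^sub>v (R *\<^sub>v c) \<in> carrier_vec n" using N_carrier[OF kb] Rc by simp
  have v: "v \<in> carrier_vec n" unfolding v_def by (rule minus_carrier_vec[OF a b])
  have "Co *\<^sub>v v = Co *\<^sub>v (N' *\<^sub>v c) - Co *\<^sub>v (N *\<^sub>v (R *\<^sub>v c))"
    unfolding v_def by (rule mult_minus_distrib_mat_vec[OF Co_carrier a b])
  also have "\<dots> = 0\<^sub>v p" using N_ker[OF kb' c] N_ker[OF kb Rc] by simp
  finally have "Cr *\<^sub>v v = 0\<^sub>v p1" by (rule kerCr[OF v])
  moreover have "vbot p1 k v = 0\<^sub>v k"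
  proof -
    have a': "N' *\<^sub>v c \<in> carrier_vec (p1 + k)" and b': "N *\<^sub>v (R *\<^sub>v c) \<in> carrier_vec (p1 + k)"
      using a b p1n by auto
    have "vbot p1 k v = vbot p1 k (N' *\<^sub>v c) - vbot p1 k (N *\<^sub>v (R *\<^sub>v c))"
      unfolding v_def by (rule vbot_minus[OF a' b'])
    also have "\<dots> = sub_mat N' p1 0 k k *\<^sub>v c - sub_mat N p1 0 k k *\<^sub>v (R *\<^sub>v c)"
      using vbotN[OF kb' c] vbotN[OF kb Rc] by simp
    also have "sub_mat N p1 0 k k *\<^sub>v (R *\<^sub>v c) = sub_mat N' p1 0 k k *\<^sub>v c"
    proof -
      have "sub_mat N p1 0 k k *\<^sub>v (R *\<^sub>v c) = (sub_mat N p1 0 k k * R) *\<^sub>v c"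
        by (rule assoc_mult_mat_vec[OF sub_mat_carrier R_carrier(1) c, symmetric])
      then show ?thesis unfolding N2R .
    qed
    finally show ?thesis using minus_cancel_vec[OF mult_mat_vec_carrier[OF sub_mat_carrier c, of N' p1 0]] by simp
  qed
  ultimately have "v = 0\<^sub>v n" using Zlem[OF v] by simp
  then have "N' *\<^sub>v c = N *\<^sub>v (R *\<^sub>v c)" unfolding v_def using a b
    by (rule vec_minus_zero_eq)
  also have "\<dots> = (N * R) *\<^sub>v c"
    by (rule assoc_mult_mat_vec[OF N_carrier[OF kb] R_carrier(1) c, symmetric])
  finally show "N' *\<^sub>v unit_vec k j = (N * R) *\<^sub>v unit_vec k j" unfolding c_def[symmetric] .
qed


lemma LLR: "LL N' = Ri * LL N"
proof (rule eq_matI)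
  fix i j assume "i < dim_row (Ri * LL N)" "j < dim_col (Ri * LL N)"
  then have i: "i < k" and j: "j < n" using LL_carrier[OF kb] N2i(1)[OF kb'] by auto
  have Rc: "Ri \<in> carrier_mat k k" by (rule R_carrier(2))
  show "LL N' $$ (i, j) = (Ri * LL N) $$ (i, j)"
  proof (cases "j < p1")
    case True
    then show ?thesis using i j Rc by (auto simp: LL_def[OF kb] LL_def[OF kb'] scalar_prod_def intro!: sum.neutral)
  next
    case False
    have "(Ri * LL N) $$ (i, j) = (Ri * minv (sub_mat N p1 0 k k)) $$ (i, j - p1)"
      using i j Rc False N2i(1)[OF kb] by (auto simp: LL_def[OF kb] scalar_prod_def intro!: sum.cong)
    also have "Ri * minv (sub_mat N p1 0 k k) = minv (sub_mat N' p1 0 k k)"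
    proof -
      have "Ri * minv (sub_mat N p1 0 k k) = minv (sub_mat N' p1 0 k k) * (sub_mat N p1 0 k k * minv (sub_mat N p1 0 k k))"
        by (rule assoc_mult_mat[OF N2i(1)[OF kb'] sub_mat_carrier N2i(1)[OF kb]])
      then show ?thesis using N2i[OF kb] N2i(1)[OF kb'] by simp
    qed
    finally show ?thesis using i j False by (simp add: LL_def[OF kb'])
  qed
qed (use LL_carrier[OF kb] LL_carrier[OF kb'] R_carrier in auto)

lemma CrAo_carrier: "Cr * Ao \<in> carrier_mat p1 n" by (rule mult_carrier_mat[OF sub_mat_carrier Ao_carrier])

lemma A12R: "cmat (Cr * Ao * N') = cmat (Cr * Ao * N) * cmat R"
proof -
  have "Cr * Ao * N' = Cr * Ao * (N * R)" by (rule arg_cong[where f="\<lambda>Z. Cr * Ao * Z", OF NR])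
  also have "\<dots> = Cr * Ao * N * R"
    by (rule assoc_mult_mat[OF CrAo_carrier N_carrier[OF kb] R_carrier(1), symmetric])
  finally have "Cr * Ao * N' = Cr * Ao * N * R" .
  then show ?thesis using cmat_mult[OF mult_carrier_mat[OF CrAo_carrier N_carrier[OF kb]] R_carrier(1)] by simp
qed

lemma LLX: assumes X: "X \<in> carrier_mat n c" shows "cmat (LL N' * X) = cmat Ri * cmat (LL N * X)"
proof -
  have "LL N' * X = Ri * LL N * X" by (rule arg_cong[where f="\<lambda>Z. Z * X", OF LLR])
  also have "\<dots> = Ri * (LL N * X)" by (rule assoc_mult_mat[OF R_carrier(2) LL_carrier[OF kb] X])
  finally have "LL N' * X = Ri * (LL N * X)" .
  then show ?thesis using cmat_mult[OF R_carrier(2) mult_carrier_mat[OF LL_carrier[OF kb] X]] by simp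
qed

lemma A22R: "cmat (LL N' * Ao * N') = cmat Ri * cmat (LL N * Ao * N) * cmat R"
proof -
  have LA: "LL N * Ao \<in> carrier_mat k n" using LL_carrier[OF kb] Ao_carrier by simp
  have e0: "LL N' * Ao * N' = Ri * LL N * Ao * (N * R)" by (rule arg_cong2[where f="\<lambda>A B. A * Ao * B", OF LLR NR])
  have e1: "Ri * LL N * Ao = Ri * (LL N * Ao)" by (rule assoc_mult_mat[OF R_carrier(2) LL_carrier[OF kb] Ao_carrier])
  have e2: "Ri * (LL N * Ao) * (N * R) = Ri * ((LL N * Ao) * (N * R))"
    by (rule assoc_mult_mat[OF R_carrier(2) LA mult_carrier_mat[OF N_carrier[OF kb] R_carrier(1)]])
  have e3: "(LL N * Ao) * (N * R) = LL N * Ao * N * R"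
    by (rule assoc_mult_mat[OF LA N_carrier[OF kb] R_carrier(1), symmetric])
  have e: "LL N' * Ao * N' = Ri * (LL N * Ao * N * R)" by (simp only: e0 e1 e2 e3)
  have c1: "LL N * Ao * N \<in> carrier_mat k k" using LA N_carrier[OF kb] by simp
  have "cmat (Ri * (LL N * Ao * N * R)) = cmat Ri * (cmat (LL N * Ao * N) * cmat R)"
    using cmat_mult[OF R_carrier(2) mult_carrier_mat[OF c1 R_carrier(1)]] cmat_mult[OF c1 R_carrier(1)] by simp
  also have "\<dots> = cmat Ri * cmat (LL N * Ao * N) * cmat R"
    by (rule assoc_mult_mat[OF cmat_carrier[OF R_carrier(2)] cmat_carrier[OF c1] cmat_carrier[OF R_carrier(1)], symmetric])
  finally show ?thesis using e by simp
qed

lemma cRRi: "cmat R * cmat Ri = 1\<^sub>m k" "cmat Ri * cmat R = 1\<^sub>m k"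
  using cmat_mult[OF R_carrier(1,2)] cmat_mult[OF R_carrier(2,1)] RRi by simp_all

lemma Wf_eq: assumes d: "det (s \<cdot>\<^sub>m 1\<^sub>m k - cmat (LL N * Ao * N)) \<noteq> 0"
  shows "Wf N' s = Wf N s" "Vf N' s = Vf N s"
proof -
  have LA: "LL N * Ao \<in> carrier_mat k n" using LL_carrier[OF kb] Ao_carrier by simp
  have cM: "cmat (LL N * Ao * N) \<in> carrier_mat k k" using LA N_carrier[OF kb] by simp
  have cX: "cmat (Cr * Ao * N) \<in> carrier_mat p1 k" using CrAo_carrier N_carrier[OF kb] by simp
  have cR: "cmat R \<in> carrier_mat k k" "cmat Ri \<in> carrier_mat k k" using R_carrier by auto
  have AE: "Ao * EE \<in> carrier_mat n p1" using Ao_carrier EE_carrier by simp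
  have Y1: "cmat (LL N * (Ao * EE)) \<in> carrier_mat k p1" using LL_carrier[OF kb] AE by simp
  have Y2: "cmat (LL N * Bo) \<in> carrier_mat k m" using LL_carrier[OF kb] Bo_carrier by simp
  have e1: "LL N' * Ao * EE = LL N' * (Ao * EE)" "LL N * Ao * EE = LL N * (Ao * EE)"
    using assoc_mult_mat[OF LL_carrier[OF kb'] Ao_carrier EE_carrier]
      assoc_mult_mat[OF LL_carrier[OF kb] Ao_carrier EE_carrier] by auto
  note core = sim_core[OF cR(1,2) cRRi cM d]
  show "Wf N' s = Wf N s"
    unfolding Wf_def[OF kb] Wf_def[OF kb'] A12R A22R e1 LLX[OF AE] using core[OF cX Y1] by simp
  show "Vf N' s = Vf N s"
    unfolding Vf_def[OF kb] Vf_def[OF kb'] A12R A22R LLX[OF Bo_carrier] using core[OF cX Y2] by simp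
qed

lemma dsf_same: assumes d: "det (s \<cdot>\<^sub>m 1\<^sub>m k - cmat (LL N * Ao * N)) \<noteq> 0"
  shows "fst (dsf_data S n m p N') s = fst (dsf_data S n m p N) s"
    "fst (snd (dsf_data S n m p N')) s = fst (snd (dsf_data S n m p N)) s"
    "snd (snd (dsf_data S n m p N')) = snd (snd (dsf_data S n m p N))"
  using Wf_eq[OF d] unfolding dsf_eq[OF kb] dsf_eq[OF kb'] by simp_all

lemma label_same: assumes d: "det (s \<cdot>\<^sub>m 1\<^sub>m k - cmat (LL N * Ao * N)) \<noteq> 0"
  shows "sig_label S n m p N' a b s = sig_label S n m p N a b s"
  using dsf_same[OF d] by (cases a; cases b) simp_all

end

lemma bad_finite: assumes kb: "kernel_basis S n N"
  shows "finite {s. det (s \<cdot>\<^sub>m 1\<^sub>m k - cmat (LL N * Ao * N)) = 0}"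
  by (rule char_finite) (use LL_carrier[OF kb] Ao_carrier N_carrier[OF kb] in simp)


definition "N0 = mat n k (\<lambda>(i,j). if i < p1 then - (Ci * C12) $$ (i,j) else (if i - p1 = j then 1 else 0))"

lemma N0_carrier: "N0 \<in> carrier_mat n k" unfolding N0_def by simp
lemma N0_carrier': "N0 \<in> carrier_mat (p1 + k) k" using N0_carrier p1n by simp

lemma CiC12: "Ci * C12 \<in> carrier_mat p1 k" using Ci(1) by simp

lemma N0_top: "sub_mat N0 0 0 p1 k = - (Ci * C12)"
  by (rule eq_matI) (use CiC12 p1n in \<open>auto simp: N0_def\<close>)

lemma N0_bot: "sub_mat N0 p1 0 k k = 1\<^sub>m k"
  by (rule eq_matI) (use p1n in \<open>auto simp: N0_def\<close>)

lemma CrN0: "Cr * N0 = 0\<^sub>m p1 k"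
proof -
  have e: "Cr * N0 = C11 * - (Ci * C12) + C12 * 1\<^sub>m k"
    using mult_split[OF Cr_carrier N0_carrier'] Cr_blocks N0_top N0_bot by simp
  have a: "C11 * (Ci * C12) = (C11 * Ci) * C12"
    by (rule assoc_mult_mat[OF sub_mat_carrier Ci(1) sub_mat_carrier, symmetric])
  have b: "C11 * - (Ci * C12) = - (C11 * (Ci * C12))" by (rule uminus_mult_right_mat) (use CiC12 in auto)
  have c: "C12 * 1\<^sub>m k = C12" by (rule right_mult_one_mat[OF sub_mat_carrier])
  have d: "- C12 + C12 = 0\<^sub>m p1 k" by (rule uminus_l_inv_mat[OF sub_mat_carrier])
  show ?thesis unfolding e b a Ci(2) c using d by simp
qed

lemma N0_vbot: assumes c: "c \<in> carrier_vec k" shows "vbot p1 k (N0 *\<^sub>v c) = c"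
  using vbot_mult[OF N0_carrier' c] N0_bot c by simp

lemma N0_low: assumes i: "p1 \<le> i" "i < p" and j: "j < k"
  shows "(Co * N0) $$ (i, j) = 0"
proof (rule ccontr)
  assume nz: "(Co * N0) $$ (i, j) \<noteq> 0"
  define I where "I = {..<p1} \<union> {i}"
  define J where "J = {..<p1} \<union> {p1 + j}"
  define cc where "cc = sub_mat Co 0 (p1 + j) p1 1"
  define rr where "rr = sub_mat Co i 0 1 p1"
  define dd where "dd = sub_mat Co i (p1 + j) 1 1"
  have cI: "card {a. a < dim_row Co \<and> a \<in> I} = p1 + 1"
    unfolding I_def using card_prefix[OF i] Co_carrier by simp
  have cJ: "card {a. a < dim_col Co \<and> a \<in> J} = p1 + 1"
    unfolding J_def using card_prefix[of p1 "p1 + j" n] Co_carrier j p1n by simp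
  have sub: "submatrix Co I J = four_block_mat C11 cc rr dd"
  proof (rule eq_matI)
    fix a b assume "a < dim_row (four_block_mat C11 cc rr dd)" "b < dim_col (four_block_mat C11 cc rr dd)"
    then have a: "a < p1 + 1" and b: "b < p1 + 1" unfolding cc_def rr_def dd_def by auto
    have "submatrix Co I J $$ (a, b) = Co $$ (pick I a, pick J b)"
      by (rule submatrix_index) (use a b cI cJ in auto)
    moreover have "pick I a = (if a < p1 then a else i)"
    proof (cases "a < p1")
      case True then show ?thesis using pick_prefix[of a p1 i] i unfolding I_def by simp
    next
      case False then have "a = p1" using a by simp
      then show ?thesis using pick_last[of p1 i] i unfolding I_def by simp
    qed
    moreover have "pick J b = (if b < p1 then b else p1 + j)"
    proof (cases "b < p1")
      case True then show ?thesis using pick_prefix[of b p1 "p1 + j"] unfolding J_def by simp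
    next
      case False then have "b = p1" using b by simp
      then show ?thesis using pick_last[of p1 "p1 + j"] unfolding J_def by simp
    qed
    ultimately show "submatrix Co I J $$ (a, b) = four_block_mat C11 cc rr dd $$ (a, b)"
      using a b unfolding cc_def rr_def dd_def by (auto simp: add.commute)
  qed (use cI cJ in \<open>auto simp: dim_submatrix cc_def rr_def dd_def\<close>)
  have e1: "(Ci * cc) $$ (t, 0) = (Ci * C12) $$ (t, j)" if t: "t < p1" for t
    using t j Ci(1) unfolding cc_def by (auto simp: scalar_prod_def add.commute intro!: sum.cong)
  have e2: "(\<Sum>t\<in>{0..<k}. Co $$ (i, t + p1) * N0 $$ (t + p1, j)) = Co $$ (i, j + p1)"
  proof -
    have "(\<Sum>t\<in>{0..<k}. Co $$ (i, t + p1) * N0 $$ (t + p1, j)) = (\<Sum>t\<in>{0..<k}. if t = j then Co $$ (i, t + p1) else 0)"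
      by (rule sum.cong) (use j p1n in \<open>auto simp: N0_def\<close>)
    also have "\<dots> = Co $$ (i, j + p1)" using j by (simp add: sum.delta')
    finally show ?thesis .
  qed
  have "(Co * N0) $$ (i, j) = (\<Sum>t\<in>{0..<p1+k}. Co $$ (i, t) * N0 $$ (t, j))"
    using i j Co_carrier N0_carrier p1n by (simp add: scalar_prod_def)
  also have "\<dots> = (\<Sum>t\<in>{0..<p1}. Co $$ (i, t) * N0 $$ (t, j)) + (\<Sum>t\<in>{0..<k}. Co $$ (i, t + p1) * N0 $$ (t + p1, j))"
    by (rule sum_split_nat)
  also have "(\<Sum>t\<in>{0..<p1}. Co $$ (i, t) * N0 $$ (t, j)) = (\<Sum>t\<in>{0..<p1}. rr $$ (0, t) * (- (Ci * cc)) $$ (t, 0))"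
    using j e1 Ci(1) CiC12 unfolding rr_def cc_def by (auto simp: N0_def intro!: sum.cong)
  finally have val: "(Co * N0) $$ (i, j) = (rr * - (Ci * cc) + dd) $$ (0, 0)"
    using e2 Ci(1) unfolding rr_def cc_def dd_def by (simp add: scalar_prod_def add.commute sum_negf)
  have "det (submatrix Co I J) = det C11 * (rr * - (Ci * cc) + dd) $$ (0, 0)"
    unfolding sub by (rule schur_det[OF sub_mat_carrier dC11]) (auto simp: cc_def rr_def dd_def)
  then have "det (submatrix Co I J) \<noteq> 0" using val nz dC11 by simp
  then have "card {a. a < n \<and> a \<in> J} \<le> vec_space.rank p Co"
    by (rule vec_space.rank_gt_minor[OF Co_carrier])
  moreover have "vec_space.rank p Co = p1" unfolding gss_p1_def using Co_carrier by simp
  ultimately show False using cJ Co_carrier by simp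
qed

lemma CoN0: "Co * N0 = 0\<^sub>m p k"
proof (rule eq_matI)
  fix i j assume "i < dim_row (0\<^sub>m p k :: real mat)" "j < dim_col (0\<^sub>m p k :: real mat)"
  then have i: "i < p" and j: "j < k" by auto
  show "(Co * N0) $$ (i, j) = 0\<^sub>m p k $$ (i, j)"
  proof (cases "i < p1")
    case True
    have "(Co * N0) $$ (i, j) = (Cr * N0) $$ (i, j)"
      using True i j Co_carrier N0_carrier p1p by (auto simp: scalar_prod_def intro!: sum.cong)
    then show ?thesis using CrN0 True i j by simp
  next
    case False then show ?thesis using N0_low[of i j] i j by simp
  qed
qed (use Co_carrier N0_carrier in auto)

lemma kb0: "kernel_basis S n N0"
  unfolding kernel_basis_def
proof (intro conjI ballI impI)
  show "N0 \<in> carrier_mat n k" by (rule N0_carrier)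
next
  fix c assume c: "c \<in> carrier_vec k" and z: "N0 *\<^sub>v c = 0\<^sub>v n"
  have "c = vbot p1 k (N0 *\<^sub>v c)" using N0_vbot[OF c] by simp
  also have "\<dots> = vbot p1 k (0\<^sub>v n)" using z by simp
  also have "\<dots> = 0\<^sub>v k" by (rule eq_vecI) (auto simp: vbot_def)
  finally show "c = 0\<^sub>v k" .
next
  show "mat_kernel Co = {N0 *\<^sub>v c |c. c \<in> carrier_vec k}"
  proof
    show "{N0 *\<^sub>v c |c. c \<in> carrier_vec k} \<subseteq> mat_kernel Co"
    proof
      fix v assume "v \<in> {N0 *\<^sub>v c |c. c \<in> carrier_vec k}"
      then obtain c where c: "c \<in> carrier_vec k" and v: "v = N0 *\<^sub>v c" by blast
      have "Co *\<^sub>v v = (Co * N0) *\<^sub>v c"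
        unfolding v by (rule assoc_mult_mat_vec[OF Co_carrier N0_carrier c, symmetric])
      also have "\<dots> = 0\<^sub>v p" unfolding CoN0 using c by (rule zero_mult_vec')
      finally show "v \<in> mat_kernel Co"
        by (intro mat_kernelI[OF Co_carrier]) (use v c N0_carrier in auto)
    qed
  next
    show "mat_kernel Co \<subseteq> {N0 *\<^sub>v c |c. c \<in> carrier_vec k}"
    proof
      fix v assume "v \<in> mat_kernel Co"
      then have v: "v \<in> carrier_vec n" and z: "Co *\<^sub>v v = 0\<^sub>v p" using mat_kernelD[OF Co_carrier] by auto
      define c where "c = vbot p1 k v"
      have c: "c \<in> carrier_vec k" unfolding c_def by simp
      have Nc: "N0 *\<^sub>v c \<in> carrier_vec n" using N0_carrier c by simp
      define w where "w = v - N0 *\<^sub>v c"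
      have w: "w \<in> carrier_vec n" unfolding w_def by (rule minus_carrier_vec[OF v Nc])
      have "Co *\<^sub>v (N0 *\<^sub>v c) = (Co * N0) *\<^sub>v c"
        by (rule assoc_mult_mat_vec[OF Co_carrier N0_carrier c, symmetric])
      also have "\<dots> = 0\<^sub>v p" unfolding CoN0 using c by (rule zero_mult_vec')
      finally have z2: "Co *\<^sub>v (N0 *\<^sub>v c) = 0\<^sub>v p" .
      have "Co *\<^sub>v w = Co *\<^sub>v v - Co *\<^sub>v (N0 *\<^sub>v c)"
        unfolding w_def by (rule mult_minus_distrib_mat_vec[OF Co_carrier v Nc])
      then have "Co *\<^sub>v w = 0\<^sub>v p" using z z2 by simp
      then have "Cr *\<^sub>v w = 0\<^sub>v p1" by (rule kerCr[OF w])
      moreover have "vbot p1 k w = 0\<^sub>v k"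
      proof -
        have v': "v \<in> carrier_vec (p1 + k)" and Nc': "N0 *\<^sub>v c \<in> carrier_vec (p1 + k)"
          using v Nc p1n by auto
        have "vbot p1 k w = vbot p1 k v - vbot p1 k (N0 *\<^sub>v c)"
          unfolding w_def by (rule vbot_minus[OF v' Nc'])
        also have "\<dots> = c - c" using N0_vbot[OF c] c_def by simp
        finally show ?thesis using c by simp
      qed
      ultimately have "w = 0\<^sub>v n" by (rule Zlem[OF w])
      then have "v = N0 *\<^sub>v c" unfolding w_def using v Nc by (rule vec_minus_zero_eq)
      then show "v \<in> {N0 *\<^sub>v c |c. c \<in> carrier_vec k}" using c by blast
    qed
  qed
qed

lemma tf_nonzero_cong: assumes "finite {s. f s \<noteq> g s}" shows "tf_nonzero f = tf_nonzero g"
proof -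
  have h: "tf_nonzero g" if fin: "finite {s. f s \<noteq> g s}" and nz: "tf_nonzero f" for f g :: "complex \<Rightarrow> complex"
  proof -
    have "{s. f s \<noteq> 0} - {s. f s \<noteq> g s} \<subseteq> {s. g s \<noteq> 0}" by auto
    moreover have "infinite ({s. f s \<noteq> 0} - {s. f s \<noteq> g s})"
      using nz fin unfolding tf_nonzero_def by (rule Diff_infinite_finite[rotated])
    ultimately show ?thesis unfolding tf_nonzero_def using finite_subset by blast
  qed
  have "{s. g s \<noteq> f s} = {s. f s \<noteq> g s}" by auto
  then show ?thesis using h[of f g] h[of g f] assms by auto
qed

lemma sig_unique: assumes kb1: "kernel_basis S n N" and kb2: "kernel_basis S n N'"
  shows "lgraph_eq (labelled_graph (sig_label S n m p N)) (labelled_graph (sig_label S n m p N'))"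
proof -
  let ?B = "{s. det (s \<cdot>\<^sub>m 1\<^sub>m k - cmat (LL N * Ao * N)) = 0}"
  have fin: "finite ?B" by (rule bad_finite[OF kb1])
  have d: "finite {s. sig_label S n m p N a b s \<noteq> sig_label S n m p N' a b s}" for a b
  proof (rule finite_subset[OF _ fin])
    show "{s. sig_label S n m p N a b s \<noteq> sig_label S n m p N' a b s} \<subseteq> ?B"
      using label_same[OF kb1 kb2] by fastforce
  qed
  show ?thesis unfolding lgraph_eq_def labelled_graph_def tf_eq_def
    using d tf_nonzero_cong[OF d] by auto
qed

end

theorem theorem1:
  fixes S :: gss and n m l p :: nat
  assumes wf: "gss_wf S n m l p"
    and inv: "invertible_mat (1\<^sub>m l - gAt S)"
    and C11: "invertible_mat (gss_C11 S)"
  shows "(\<exists>!G. is_subsystem_structure S n m l p G)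
    \<and> (\<exists>G. is_signal_structure S n m p G)
    \<and> (\<forall>G1 G2. is_signal_structure S n m p G1 \<longrightarrow> is_signal_structure S n m p G2 \<longrightarrow> lgraph_eq G1 G2)
    \<and> (\<exists>!G. is_sparsity_structure S n m p G)"
proof (intro conjI allI impI)
  interpret sigctx S n m l p by (unfold_locales) (rule wf, rule C11)
  show "\<exists>!G. is_subsystem_structure S n m l p G" by (rule subsystem_unique)
  show "\<exists>G. is_signal_structure S n m p G"
    unfolding is_signal_structure_def using kb0 by blast
  fix G1 G2 assume g1: "is_signal_structure S n m p G1" and g2: "is_signal_structure S n m p G2"
  from g1 obtain N1 where N1: "kernel_basis S n N1" "G1 = labelled_graph (sig_label S n m p N1)"
    unfolding is_signal_structure_def by blast
  from g2 obtain N2 where N2: "kernel_basis S n N2" "G2 = labelled_graph (sig_label S n m p N2)"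
    unfolding is_signal_structure_def by blast
  show "lgraph_eq G1 G2" unfolding N1(2) N2(2) by (rule sig_unique[OF N1(1) N2(1)])
next
  show "\<exists>!G. is_sparsity_structure S n m p G" unfolding is_sparsity_structure_def by simp
qed

end
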